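(* Let $f\in\mathcal A_C$ and $g\in\mathcal{BV}$. Then: (a) $f*g(x)=\int_{-\infty}^\infty f(x-y)g(y)\,dy$ exists for every $x\in\mathbb R$; (b) $f*g=g*f$, i.e. $\int_{-\infty}^\infty f(x-y)g(y)\,dy=\int_{-\infty}^\infty f(y)g(x-y)\,dy$ for all $x\in\mathbb R$; (c) $\|f*g\|_\infty\le \left|\int_{-\infty}^\infty f\right|\inf_{\mathbb R}|g|+\|f\|\,Vg\le \|f\|\,\|g\|_{\mathcal{BV}}$; (d) $f*g\in C^0(\overline{\mathbb R})$ and $\lim_{x\to\pm\infty}f*g(x)=g(\pm\infty)\int_{-\infty}^\infty f$; (f) for all $x,z\in\mathbb R$, $\tau_z(f*g)(x)=(\tau_zf)*g(x)=f*(\tau_zg)(x)$.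
   Context: Notation: $\mathcal D=C_c^\infty(\mathbb R)$ (test functions), $\mathcal D'$ the Schwartz distributions; derivatives of distributions are distributional derivatives. $\overline{\mathbb R}=[-\infty,\infty]$ and $F(\pm\infty)=\lim_{x\to\pm\infty}F(x)$. $C^0(\overline{\mathbb R})$ is the set of continuous $F:\mathbb R\to\mathbb R$ having finite limits at $\pm\infty$; $\|F\|_\infty=\sup_{\mathbb R}|F|$. $\mathcal B_C=\{F\in C^0(\overline{\mathbb R}):F(-\infty)=0\}$. $\mathcal A_C=\{f\in\mathcal D': f=F' \text{ for some } F\in\mathcal B_C\}$; the primitive $F\in\mathcal B_C$ of $f$ is unique, and the continuous primitive integral is $\int_a^bf=F(b)-F(a)$ for $a,b\in\overline{\mathbb R}$. The Alexiewicz norm is $\|f\|=\sup_I|\int_If|$, the supremum over all intervals $I\subset\mathbb R$. A function in $L^1$ is identified with the distribution it defines. $\mathcal{BV}$ is the set of $g:\mathbb R\to\mathbb R$ with finite variation $Vg=\sup\sum_i|g(x_i)-g(y_i)|$ (supremum over finite families of disjoint intervals $(x_i,y_i)$); such $g$ have limits $g(\pm\infty)$, and $\|g\|_{\mathcal{BV}}=|g(-\infty)|+Vg$. For $h\in\mathcal A_C$ with primitive $H$ and $g\in\mathcal{BV}$ the integral of the product is defined by $\int_{-\infty}^\infty hg=H(\infty)g(\infty)-\int_{-\infty}^\infty H\,dg$ (Henstock–Stieltjes integral). For $f\in\mathcal A_C$ with primitive $F$ and $x\in\mathbb R$, $f(x-\cdot)$ denotes the element of $\mathcal A_C$ with primitive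 $y\mapsto F(\infty)-F(x-y)$, and for $g\in\mathcal{BV}$ the convolution is $f*g(x)=\int_{-\infty}^\infty f(x-y)g(y)\,dy$, the product integral of $f(x-\cdot)$ and $g$; $g*f(x)=\int_{-\infty}^\infty f(y)g(x-y)\,dy$ is the product integral of $f$ and $y\mapsto g(x-y)$. Translations: for a function $\phi$, $\tau_z\phi(y)=\phi(y-z)$; for $f\in\mathcal A_C$ with primitive $F$, $\tau_zf$ is the element of $\mathcal A_C$ with primitive $F(\cdot-z)$ (equivalently $\langle\tau_zf,\phi\rangle=\langle f,\tau_{-z}\phi\rangle$). *)

theory Defs
  imports "HOL-Analysis.Analysis"
begin

definition lim_top :: "(real \<Rightarrow> real) \<Rightarrow> real" where
  "lim_top F = Lim at_top F"

definition lim_bot :: "(real \<Rightarrow> real) \<Rightarrow> real" where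
  "lim_bot F = Lim at_bot F"

definition C0bar :: "(real \<Rightarrow> real) \<Rightarrow> bool" where
  "C0bar F \<longleftrightarrow> continuous_on UNIV F \<and> (\<exists>L. (F \<longlongrightarrow> L) at_top) \<and> (\<exists>L. (F \<longlongrightarrow> L) at_bot)"

text \<open>An element f of A_C is represented by its unique primitive F in B_C.\<close>
definition BC :: "(real \<Rightarrow> real) \<Rightarrow> bool" where
  "BC F \<longleftrightarrow> C0bar F \<and> (F \<longlongrightarrow> 0) at_bot"

text \<open>Integral of f over the whole line: F(inf) - F(-inf) = F(inf).\<close>
definition int_R :: "(real \<Rightarrow> real) \<Rightarrow> real" where
  "int_R F = lim_top F - lim_bot F"

text \<open>Alexiewicz norm: sup over intervals of the absolute integral.\<close>
definition alex_norm :: "(real \<Rightarrow> real) \<Rightarrow> real" where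
  "alex_norm F = (SUP p \<in> {p :: real \<times> real. fst p \<le> snd p}. \<bar>F (snd p) - F (fst p)\<bar>)"

definition var_sums :: "(real \<Rightarrow> real) \<Rightarrow> real set" where
  "var_sums g = {(\<Sum>(x,y)\<in>S. \<bar>g x - g y\<bar>) | S. finite S \<and> (\<forall>(x,y)\<in>S. x < y) \<and>
      (\<forall>p\<in>S. \<forall>q\<in>S. p \<noteq> q \<longrightarrow> {fst p<..<snd p} \<inter> {fst q<..<snd q} = {})}"

definition is_BV :: "(real \<Rightarrow> real) \<Rightarrow> bool" where
  "is_BV g \<longleftrightarrow> bdd_above (var_sums g)"

definition Var :: "(real \<Rightarrow> real) \<Rightarrow> real" where
  "Var g = Sup (var_sums g)"

definition BV_norm :: "(real \<Rightarrow> real) \<Rightarrow> real" where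
  "BV_norm g = \<bar>lim_bot g\<bar> + Var g"

definition hs_has_integral :: "(real \<Rightarrow> real) \<Rightarrow> (real \<Rightarrow> real) \<Rightarrow> real \<Rightarrow> real \<Rightarrow> real \<Rightarrow> bool" where
  "hs_has_integral H g a b I \<longleftrightarrow>
     (\<forall>e>0. \<exists>\<gamma>. gauge \<gamma> \<and> (\<forall>p. p tagged_division_of {a..b} \<and> \<gamma> fine p \<longrightarrow>
        \<bar>(\<Sum>(t,K)\<in>p. H t * (g (Sup K) - g (Inf K))) - I\<bar> < e))"

definition hs_int :: "(real \<Rightarrow> real) \<Rightarrow> (real \<Rightarrow> real) \<Rightarrow> real \<Rightarrow> real \<Rightarrow> real" where
  "hs_int H g a b = (THE I. hs_has_integral H g a b I)"

definition hs_integrable_R :: "(real \<Rightarrow> real) \<Rightarrow> (real \<Rightarrow> real) \<Rightarrow> bool" where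
  "hs_integrable_R H g \<longleftrightarrow> (\<forall>a b. a \<le> b \<longrightarrow> (\<exists>I. hs_has_integral H g a b I)) \<and>
     (\<exists>L. ((\<lambda>(a,b). hs_int H g a b) \<longlongrightarrow> L) (at_bot \<times>\<^sub>F at_top))"

definition hs_integral_R :: "(real \<Rightarrow> real) \<Rightarrow> (real \<Rightarrow> real) \<Rightarrow> real" where
  "hs_integral_R H g = Lim (at_bot \<times>\<^sub>F at_top) (\<lambda>(a,b). hs_int H g a b)"

text \<open>int hg = H(inf) g(inf) - int H dg, h given by its primitive H.\<close>
definition prod_int :: "(real \<Rightarrow> real) \<Rightarrow> (real \<Rightarrow> real) \<Rightarrow> real" where
  "prod_int H g = lim_top H * lim_top g - hs_integral_R H g"

text \<open>Primitive of f(x - .) : y |-> F(inf) - F(x - y).\<close>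
definition reflp :: "(real \<Rightarrow> real) \<Rightarrow> real \<Rightarrow> real \<Rightarrow> real" where
  "reflp F x = (\<lambda>y. lim_top F - F (x - y))"

definition conv_fg :: "(real \<Rightarrow> real) \<Rightarrow> (real \<Rightarrow> real) \<Rightarrow> real \<Rightarrow> real" where
  "conv_fg F g x = prod_int (reflp F x) g"

definition conv_gf :: "(real \<Rightarrow> real) \<Rightarrow> (real \<Rightarrow> real) \<Rightarrow> real \<Rightarrow> real" where
  "conv_gf F g x = prod_int F (\<lambda>y. g (x - y))"

text \<open>Translation tau_z phi (y) = phi (y - z); for f in A_C applied to its primitive.\<close>
definition transl :: "real \<Rightarrow> (real \<Rightarrow> real) \<Rightarrow> real \<Rightarrow> real" where
  "transl z \<phi> = (\<lambda>y. \<phi> (y - z))"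

end

theory Submission
  imports Defs
begin


definition fams :: "(real \<Rightarrow> real) \<Rightarrow> real set \<Rightarrow> real set" where
  "fams g A = {(\<Sum>(x,y)\<in>S. \<bar>g x - g y\<bar>) | S. finite S \<and> (\<forall>(x,y)\<in>S. x < y \<and> x \<in> A \<and> y \<in> A) \<and>
      (\<forall>p\<in>S. \<forall>q\<in>S. p \<noteq> q \<longrightarrow> {fst p<..<snd p} \<inter> {fst q<..<snd q} = {})}"

lemma fams_sub_var: "fams g A \<subseteq> var_sums g"
  unfolding fams_def var_sums_def by fastforce

lemma fams_mono: "A \<subseteq> B \<Longrightarrow> fams g A \<subseteq> fams g B"
  unfolding fams_def by fastforce

lemma zero_fams: "0 \<in> fams g A"
  unfolding fams_def by (rule CollectI, rule exI[of _ "{}"]) auto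

lemma Var_ge: assumes "is_BV g" "s \<in> var_sums g" shows "s \<le> Var g"
  using assms unfolding is_BV_def Var_def by (simp add: cSup_upper)

lemma Var_nonneg: assumes "is_BV g" shows "0 \<le> Var g"
  using Var_ge[OF assms] zero_fams fams_sub_var by blast

lemma fams_le_Var: assumes "is_BV g" "s \<in> fams g A" shows "s \<le> Var g"
  using Var_ge[OF assms(1)] assms(2) fams_sub_var by blast

lemma fams_nonneg: "s \<in> fams g A \<Longrightarrow> 0 \<le> s"
  unfolding fams_def by (auto intro!: sum_nonneg)

definition phi' :: "(real \<Rightarrow> real) \<Rightarrow> real set \<Rightarrow> real" where
  "phi' g K = (if K = {} then 0 else g (Sup K) - g (Inf K))"

lemma phi'_ivl: "phi' g {u..v} = (if u \<le> v then g v - g u else 0)"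
  unfolding phi'_def by auto

lemma phi'_degen: "\<not> u < v \<Longrightarrow> phi' g {u..v} = 0"
  unfolding phi'_def by (cases "u = v") auto

lemma fam_sum:
  fixes I :: "'i \<Rightarrow> real set"
  assumes X: "finite X" and iv: "\<And>x. x \<in> X \<Longrightarrow> \<exists>u v. I x = {u..v}"
    and sub: "\<And>x. x \<in> X \<Longrightarrow> I x \<subseteq> A"
    and dis: "\<And>x y. x \<in> X \<Longrightarrow> y \<in> X \<Longrightarrow> x \<noteq> y \<Longrightarrow> interior (I x) \<inter> interior (I y) = {}"
  shows "(\<Sum>x\<in>X. \<bar>phi' g (I x)\<bar>) \<in> fams g A"
proof -
  define Y where "Y = {x\<in>X. Inf (I x) < Sup (I x) \<and> I x \<noteq> {}}"
  define e where "e x = (Inf (I x), Sup (I x))" for x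
  have ivY: "\<exists>u v. I x = {u..v} \<and> u < v \<and> e x = (u,v)" if xY: "x \<in> Y" for x
  proof -
    have "x \<in> X" using xY unfolding Y_def by blast
    then obtain u v where uv: "I x = {u..v}" using iv by blast
    with xY show ?thesis
      unfolding Y_def e_def by auto
  qed
  have zero: "phi' g (I x) = 0" if xXY: "x \<in> X - Y" for x
  proof -
    have xX: "x \<in> X" "x \<notin> Y" using xXY by auto
    obtain u v where uv: "I x = {u..v}" using iv[OF xX(1)] by blast
    have "\<not> u < v"
    proof
      assume "u < v"
      then have "Inf (I x) < Sup (I x) \<and> I x \<noteq> {}" using uv by simp
      then show False using xX unfolding Y_def by blast
    qed
    then show ?thesis using uv phi'_degen by metis
  qed
  have "(\<Sum>x\<in>X. \<bar>phi' g (I x)\<bar>) = (\<Sum>x\<in>Y. \<bar>phi' g (I x)\<bar>)"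
    using X zero by (intro sum.mono_neutral_right) (auto simp: Y_def)
  also have inj: "inj_on e Y"
  proof
    fix x y assume xy: "x \<in> Y" "y \<in> Y" "e x = e y"
    show "x = y"
    proof (rule ccontr)
      assume "x \<noteq> y"
      then have "interior (I x) \<inter> interior (I y) = {}" using dis xy Y_def by blast
      moreover obtain u v where "I x = {u..v}" "u < v" "e x = (u,v)" using ivY xy by blast
      moreover obtain u' v' where "I y = {u'..v'}" "u' < v'" "e y = (u',v')" using ivY xy by blast
      ultimately show False using xy(3) by auto
    qed
  qed
  have "\<bar>phi' g (I x)\<bar> = (case e x of (u,v) \<Rightarrow> \<bar>g u - g v\<bar>)" if xY: "x \<in> Y" for x
  proof -
    obtain u v where "I x = {u..v}" "u < v" "e x = (u,v)" using ivY xY by blast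
    then show ?thesis by (simp add: phi'_ivl abs_minus_commute)
  qed
  then have "(\<Sum>x\<in>Y. \<bar>phi' g (I x)\<bar>) = (\<Sum>(u,v)\<in>e ` Y. \<bar>g u - g v\<bar>)"
    using inj by (simp add: sum.reindex)
  finally have eq: "(\<Sum>x\<in>X. \<bar>phi' g (I x)\<bar>) = (\<Sum>(u,v)\<in>e ` Y. \<bar>g u - g v\<bar>)" .
  have "finite (e ` Y)" using X by (simp add: Y_def)
  moreover have P1: "fst (e x) < snd (e x) \<and> fst (e x) \<in> A \<and> snd (e x) \<in> A" if x: "x \<in> Y" for x
  proof -
    obtain u v where "I x = {u..v}" "u < v" "e x = (u,v)" using ivY x by blast
    moreover have "I x \<subseteq> A" using sub x Y_def by blast
    ultimately show ?thesis by auto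
  qed
  then have "\<forall>(u,v)\<in>e ` Y. u < v \<and> u \<in> A \<and> v \<in> A"
  proof (intro ballI)
    fix z assume "z \<in> e ` Y"
    then obtain x where "z = e x" "x \<in> Y" by blast
    with P1[OF this(2)] show "case z of (u,v) \<Rightarrow> u < v \<and> u \<in> A \<and> v \<in> A"
      by (cases z) auto
  qed
  moreover have "\<forall>p\<in>e ` Y. \<forall>q\<in>e ` Y. p \<noteq> q \<longrightarrow> {fst p<..<snd p} \<inter> {fst q<..<snd q} = {}"
  proof (intro ballI impI equalityI subsetI)
    fix p q z assume pq: "p \<in> e ` Y" "q \<in> e ` Y" "p \<noteq> q" "z \<in> {fst p<..<snd p} \<inter> {fst q<..<snd q}"
    then obtain x y where "p = e x" "q = e y" "x \<in> Y" "y \<in> Y" by blast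
    with pq have xy: "x \<in> Y" "y \<in> Y" "e x \<noteq> e y" "z \<in> {fst (e x)<..<snd (e x)}" "z \<in> {fst (e y)<..<snd (e y)}" by auto
    then have "x \<noteq> y" by auto
    then have "interior (I x) \<inter> interior (I y) = {}" using dis xy Y_def by blast
    moreover obtain u v where "I x = {u..v}" "u < v" "e x = (u,v)" using ivY xy by blast
    moreover obtain u' v' where "I y = {u'..v'}" "u' < v'" "e y = (u',v')" using ivY xy by blast
    ultimately show "z \<in> {}" using xy by auto
  qed simp
  ultimately show ?thesis unfolding eq fams_def by blast
qed



definition SS :: "(real \<Rightarrow> real) \<Rightarrow> (real \<Rightarrow> real) \<Rightarrow> (real \<times> real set) set \<Rightarrow> real" where
  "SS H g p = (\<Sum>(t,K)\<in>p. H t * (g (Sup K) - g (Inf K)))"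

lemma phi'_int_empty:
  assumes "interior ({x..y} \<inter> {x'..y'}) = {}"
  shows "phi' g ({x..y} \<inter> {x'..y'}) = 0"
proof -
  have "{x..y} \<inter> {x'..y'} = {max x x'..min y y'}" by auto
  moreover have "\<not> max x x' < min y y'"
  proof
    assume "max x x' < min y y'"
    then have "{max x x'<..<min y y'} \<noteq> {}" by (simp only: greaterThanLessThan_empty_iff not_le)
    then show False using assms calculation by (auto simp: min_def max_def split: if_split_asm)
  qed
  ultimately show ?thesis using phi'_degen by metis
qed

lemma phi'_operative: "operative_real (+) (0::real) (phi' g)"
proof
  show "phi' g {a..b} = 0" if "b \<le> a" for a b
    using that by (auto simp: phi'_ivl)
  show "phi' g {a..c} + phi' g {c..b} = phi' g {a..b}" if "a < c" "c < b" for a b c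
    using that by (auto simp: phi'_ivl)
qed

lemma phi'_division:
  assumes "d division_of {a..b}"
  shows "sum (phi' g) d = phi' g {a..b}"
proof -
  interpret operative_real "(+)" "0::real" "phi' g"
    by (rule phi'_operative)
  have "comm_monoid_set.F (+) 0 = sum" by (simp add: sum_def)
  show ?thesis using division[of d a b] assms unfolding sum_def by simp
qed

lemma split_by_q:
  assumes K: "K = {u..v}" "K \<subseteq> {a..b}" and q: "q tagged_division_of {a..b}"
  shows "phi' g K = (\<Sum>(s,L)\<in>q. phi' g (K \<inter> L))"
proof -
  have d: "snd ` q division_of {a..b}" using division_of_tagged_division[OF q] .
  have D: "{cbox u v \<inter> k | k. k \<in> snd ` q \<and> cbox u v \<inter> k \<noteq> {}} division_of (cbox u v)"
    using division_inter_1[of "snd ` q" "{a..b}" u v] d K by simp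
  then have D': "{K \<inter> k | k. k \<in> snd ` q \<and> K \<inter> k \<noteq> {}} division_of {u..v}"
    using K by simp
  have ivq: "\<exists>x y. L = {x..y}" if "L \<in> snd ` q" for L
    using d that by (metis box_real(2) division_ofD(4))
  have "(\<Sum>(s,L)\<in>q. phi' g (K \<inter> L)) = (\<Sum>L\<in>snd ` q. phi' g (K \<inter> L))"
  proof (rule sum.over_tagged_division_lemma[OF q, of "\<lambda>L. phi' g (K \<inter> L)"])
    fix x y :: real assume "box x y = {}"
    then have "interior ({u..v} \<inter> {x..y}) = {}" by simp
    then show "phi' g (K \<inter> cbox x y) = 0" using K phi'_int_empty[of u v x y g] by simp
  qed
  also have "\<dots> = sum (phi' g) ((\<lambda>L. K \<inter> L) ` snd ` q)"
  proof (rule sum.reindex_nontrivial[symmetric, unfolded o_def])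
    show "finite (snd ` q)" using q by auto
    fix L L' assume LL: "L \<in> snd ` q" "L' \<in> snd ` q" "L \<noteq> L'" "K \<inter> L = K \<inter> L'"
    have "interior L \<inter> interior L' = {}" using d LL division_ofD(5) by blast
    moreover have "interior (K \<inter> L) \<subseteq> interior L" by (simp add: interior_mono)
    moreover have "interior (K \<inter> L) \<subseteq> interior L'" using LL(4) by (metis Int_lower2 interior_mono)
    ultimately have "interior (K \<inter> L) = {}" by blast
    moreover obtain x y where "L = {x..y}" using ivq[OF LL(1)] by blast
    ultimately show "phi' g (K \<inter> L) = 0" using K phi'_int_empty[of u v x y g] by simp
  qed
  also have "\<dots> = sum (phi' g) {K \<inter> k | k. k \<in> snd ` q \<and> K \<inter> k \<noteq> {}}"
    by (rule sum.mono_neutral_right) (use q in \<open>auto simp: phi'_def\<close>)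
  also have "\<dots> = phi' g K" using phi'_division[OF D'] K by simp
  finally show ?thesis by simp
qed

lemma tag_phi': "p tagged_division_of (S::real set) \<Longrightarrow> (t,K) \<in> p \<Longrightarrow> g (Sup K) - g (Inf K) = phi' g K"
  unfolding phi'_def by auto

lemma tdiv_ivl:
  fixes S :: "real set"
  assumes p: "p tagged_division_of S" and tK: "(t,K) \<in> p" shows "\<exists>u v. K = {u..v} \<and> u \<le> v"
proof -
  obtain u v where K: "K = cbox u v" using tagged_division_ofD(4)[OF p tK] by blast
  have "t \<in> K" using tagged_division_ofD(2)[OF p tK] .
  moreover have "cbox u v = {u..v}" by (rule box_real(2))
  ultimately have "K = {u..v} \<and> u \<le> v" using K by auto
  then show ?thesis by blast
qed

lemma SS_double:
  assumes p: "p tagged_division_of {a..b}" and q: "q tagged_division_of {a..b}"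
  shows "SS H g p = (\<Sum>(t,K)\<in>p. \<Sum>(s,L)\<in>q. H t * phi' g (K \<inter> L))"
  unfolding SS_def
proof (rule sum.cong[OF refl], clarify)
  fix t K assume tK: "(t,K) \<in> p"
  obtain u v where "K = {u..v}" using tdiv_ivl[OF p tK] by blast
  moreover have "K \<subseteq> {a..b}" using p tK by blast
  ultimately have "phi' g K = (\<Sum>(s,L)\<in>q. phi' g (K \<inter> L))" using split_by_q q by blast
  then show "H t * (g (Sup K) - g (Inf K)) = (\<Sum>(s,L)\<in>q. H t * phi' g (K \<inter> L))"
    using tag_phi'[OF p tK] by (simp add: sum_distrib_left case_prod_unfold)
qed

lemma refine:
  assumes g: "is_BV g" and p: "p tagged_division_of {a..b}" and q: "q tagged_division_of {a..b}"
    and fp: "(\<lambda>x. ball x d) fine p" and fq: "(\<lambda>x. ball x d) fine q"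
    and H: "\<And>s t. s \<in> {a..b} \<Longrightarrow> t \<in> {a..b} \<Longrightarrow> \<bar>s - t\<bar> < 2 * d \<Longrightarrow> \<bar>H s - H t\<bar> \<le> e"
    and e: "0 \<le> e"
  shows "\<bar>SS H g p - SS H g q\<bar> \<le> e * Var g"
proof -
  have fin: "finite p" "finite q" using p q by auto
  have "SS H g p = (\<Sum>(t,K)\<in>p. \<Sum>(s,L)\<in>q. H t * phi' g (K \<inter> L))" by (rule SS_double[OF p q])
  also have "\<dots> = (\<Sum>(x,y)\<in>p \<times> q. H (fst x) * phi' g (snd x \<inter> snd y))"
    by (simp add: sum.cartesian_product case_prod_unfold)
  finally have 1: "SS H g p = (\<Sum>(x,y)\<in>p \<times> q. H (fst x) * phi' g (snd x \<inter> snd y))" .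
  have "SS H g q = (\<Sum>(s,L)\<in>q. \<Sum>(t,K)\<in>p. H s * phi' g (L \<inter> K))" by (rule SS_double[OF q p])
  also have "\<dots> = (\<Sum>(t,K)\<in>p. \<Sum>(s,L)\<in>q. H s * phi' g (K \<inter> L))"
    unfolding case_prod_unfold by (subst sum.swap) (simp add: Int_commute)
  also have "\<dots> = (\<Sum>(x,y)\<in>p \<times> q. H (fst y) * phi' g (snd x \<inter> snd y))"
    by (simp add: sum.cartesian_product case_prod_unfold)
  finally have 2: "SS H g q = (\<Sum>(x,y)\<in>p \<times> q. H (fst y) * phi' g (snd x \<inter> snd y))" .
  have "\<bar>SS H g p - SS H g q\<bar> = \<bar>\<Sum>(x,y)\<in>p \<times> q. (H (fst x) - H (fst y)) * phi' g (snd x \<inter> snd y)\<bar>"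
    unfolding 1 2 by (simp add: sum_subtractf[symmetric] case_prod_unfold left_diff_distrib)
  also have "\<dots> \<le> (\<Sum>(x,y)\<in>p \<times> q. \<bar>(H (fst x) - H (fst y)) * phi' g (snd x \<inter> snd y)\<bar>)"
    by (rule sum_abs[THEN order_trans]) (simp add: case_prod_unfold)
  also have "\<dots> \<le> (\<Sum>z\<in>p \<times> q. e * \<bar>phi' g ((\<lambda>(x,y). snd x \<inter> snd y) z)\<bar>)"
  proof (rule sum_mono)
    fix z assume "z \<in> p \<times> q"
    then obtain t K s L where zz: "z = ((t,K),(s,L))" and tK: "(t,K) \<in> p" and sL: "(s,L) \<in> q" by auto
    have X: "\<bar>(H t - H s) * phi' g (K \<inter> L)\<bar> \<le> e * \<bar>phi' g (K \<inter> L)\<bar>"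
    proof (cases "K \<inter> L = {}")
      case True then show ?thesis by (simp add: phi'_def)
    next
      case False
      then obtain m where m: "m \<in> K" "m \<in> L" by blast
      have "K \<subseteq> ball t d" "L \<subseteq> ball s d" using fp fq tK sL by auto
      then have "dist t m < d" "dist s m < d" using m by auto
      then have "\<bar>t - s\<bar> < 2 * d" by (simp add: dist_real_def)
      moreover have "t \<in> {a..b}" "s \<in> {a..b}" using tag_in_interval[OF p tK] tag_in_interval[OF q sL] by auto
      ultimately have "\<bar>H t - H s\<bar> \<le> e" using H by blast
      then show ?thesis by (simp add: abs_mult mult_right_mono)
    qed
    show "(case z of (x,y) \<Rightarrow> \<bar>(H (fst x) - H (fst y)) * phi' g (snd x \<inter> snd y)\<bar>)
          \<le> e * \<bar>phi' g ((\<lambda>(x,y). snd x \<inter> snd y) z)\<bar>"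
      using X by (simp add: zz)
  qed
  also have "\<dots> = e * (\<Sum>z\<in>p \<times> q. \<bar>phi' g ((\<lambda>(x,y). snd x \<inter> snd y) z)\<bar>)"
    by (simp add: sum_distrib_left)
  also have "\<dots> \<le> e * Var g"
  proof (rule mult_left_mono[OF _ e], rule fams_le_Var[OF g], rule fam_sum)
    show "finite (p \<times> q)" using fin by simp
    fix z assume z: "z \<in> p \<times> q"
    obtain t K s L where zz: "z = ((t,K),(s,L))" using prod.collapse by metis
    have mem: "(t,K) \<in> p" "(s,L) \<in> q" using z zz by auto
    obtain u v where KK: "K = {u..v}" using tdiv_ivl[OF p mem(1)] by blast
    obtain u' v' where LL: "L = {u'..v'}" using tdiv_ivl[OF q mem(2)] by blast
    have e1: "(\<lambda>(x,y). snd x \<inter> snd y) z = {max u u'..min v v'}"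
      unfolding zz KK LL by (simp add: Int_atLeastAtMost)
    then show "\<exists>x y. (\<lambda>(x,y). snd x \<inter> snd y) z = {x..y}" by blast
    have "K \<subseteq> {a..b}" using tagged_division_ofD(3)[OF p mem(1)] .
    then show "(\<lambda>(x,y). snd x \<inter> snd y) z \<subseteq> {a..b}" unfolding zz by auto
  next
    fix z w assume zw: "z \<in> p \<times> q" "w \<in> p \<times> q" "z \<noteq> w"
    obtain t K s L where zz: "z = ((t,K),(s,L))" using prod.collapse by metis
    obtain t' K' s' L' where ww: "w = ((t',K'),(s',L'))" using prod.collapse by metis
    have mem: "(t,K) \<in> p" "(s,L) \<in> q" "(t',K') \<in> p" "(s',L') \<in> q" using zw zz ww by auto
    have "(t,K) \<noteq> (t',K') \<or> (s,L) \<noteq> (s',L')" using zw zz ww by auto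
    then have "interior K \<inter> interior K' = {} \<or> interior L \<inter> interior L' = {}"
    proof
      assume "(t,K) \<noteq> (t',K')"
      then show ?thesis using tagged_division_ofD(5)[OF p mem(1) mem(3)] by blast
    next
      assume "(s,L) \<noteq> (s',L')"
      then show ?thesis using tagged_division_ofD(5)[OF q mem(2) mem(4)] by blast
    qed
    then have "interior (K \<inter> L) \<inter> interior (K' \<inter> L') = {}" unfolding interior_Int by blast
    then show "interior ((\<lambda>(x,y). snd x \<inter> snd y) z) \<inter> interior ((\<lambda>(x,y). snd x \<inter> snd y) w) = {}"
      by (simp add: zz ww)
  qed
  finally show ?thesis .
qed



definition hsc :: "(real \<Rightarrow> real) \<Rightarrow> (real \<Rightarrow> real) \<Rightarrow> real \<Rightarrow> real \<Rightarrow> real \<Rightarrow> bool" where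
  "hsc H g a b I \<longleftrightarrow> (\<forall>e>0. \<exists>d>0. \<forall>p. p tagged_division_of {a..b} \<and> (\<lambda>x. ball x d) fine p
     \<longrightarrow> \<bar>SS H g p - I\<bar> < e)"

lemma fine_mono: "d1 \<le> d2 \<Longrightarrow> (\<lambda>x. ball x d1) fine p \<Longrightarrow> (\<lambda>x. ball x d2) fine p"
  unfolding fine_def by fastforce

lemma hsc_hs: assumes "hsc H g a b I" shows "hs_has_integral H g a b I"
  unfolding hs_has_integral_def
proof (intro allI impI)
  fix e :: real assume "e > 0"
  then obtain d where "d > 0" and d: "\<And>p. p tagged_division_of {a..b} \<and> (\<lambda>x. ball x d) fine p
     \<Longrightarrow> \<bar>SS H g p - I\<bar> < e" using assms unfolding hsc_def by blast
  show "\<exists>\<gamma>. gauge \<gamma> \<and> (\<forall>p. p tagged_division_of {a..b} \<and> \<gamma> fine p \<longrightarrow>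
        \<bar>(\<Sum>(t,K)\<in>p. H t * (g (Sup K) - g (Inf K))) - I\<bar> < e)"
    using d \<open>d > 0\<close> unfolding SS_def by (intro exI[of _ "\<lambda>x. ball x d"]) auto
qed

lemma abs_tri_aux: "\<bar>s - i\<bar> < \<bar>i - j\<bar> / 2 \<Longrightarrow> \<bar>s - j\<bar> < \<bar>i - j\<bar> / 2 \<Longrightarrow> False" for s i j :: real
  by (simp add: abs_if split: if_splits)

lemma hs_unique:
  assumes "hs_has_integral H g a b I" "hs_has_integral H g a b J" shows "I = J"
proof (rule ccontr)
  assume "I \<noteq> J"
  define e where "e = \<bar>I - J\<bar> / 2"
  have e: "e > 0" using \<open>I \<noteq> J\<close> unfolding e_def by simp
  obtain \<gamma>1 where g1: "gauge \<gamma>1" "\<And>p. p tagged_division_of {a..b} \<and> \<gamma>1 fine p \<Longrightarrow>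
        \<bar>(\<Sum>(t,K)\<in>p. H t * (g (Sup K) - g (Inf K))) - I\<bar> < e"
    using assms(1) e unfolding hs_has_integral_def by meson
  obtain \<gamma>2 where g2: "gauge \<gamma>2" "\<And>p. p tagged_division_of {a..b} \<and> \<gamma>2 fine p \<Longrightarrow>
        \<bar>(\<Sum>(t,K)\<in>p. H t * (g (Sup K) - g (Inf K))) - J\<bar> < e"
    using assms(2) e unfolding hs_has_integral_def by meson
  obtain p where p: "p tagged_division_of {a..b}" "(\<lambda>x. \<gamma>1 x \<inter> \<gamma>2 x) fine p"
    using fine_division_exists_real[OF gauge_Int[OF g1(1) g2(1)]] by blast
  then have "\<gamma>1 fine p" "\<gamma>2 fine p" using fine_Int by blast+
  then have "\<bar>(\<Sum>(t,K)\<in>p. H t * (g (Sup K) - g (Inf K))) - I\<bar> < e"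
    "\<bar>(\<Sum>(t,K)\<in>p. H t * (g (Sup K) - g (Inf K))) - J\<bar> < e" using g1 g2 p by auto
  then show False unfolding e_def by (rule abs_tri_aux)
qed

lemma hsc_int: "hsc H g a b I \<Longrightarrow> hs_int H g a b = I"
  unfolding hs_int_def by (rule the_equality) (auto intro: hsc_hs hs_unique)

lemma hsc_exists:
  assumes g: "is_BV g" and H: "continuous_on {a..b} H"
  shows "\<exists>I. hsc H g a b I"
proof -
  define V where "V = Var g"
  have V0: "0 \<le> V" using Var_nonneg[OF g] V_def by simp
  have uc: "\<exists>d>0. \<forall>s\<in>{a..b}. \<forall>t\<in>{a..b}. \<bar>s - t\<bar> < d \<longrightarrow> \<bar>H s - H t\<bar> \<le> \<epsilon>" if eps: "\<epsilon> > 0" for \<epsilon>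
  proof -
    have "uniformly_continuous_on {a..b} H" by (rule compact_uniformly_continuous[OF H compact_Icc])
    then obtain d where "d > 0" "\<forall>x\<in>{a..b}. \<forall>x'\<in>{a..b}. dist x' x < d \<longrightarrow> dist (H x') (H x) < \<epsilon>"
      using eps unfolding uniformly_continuous_on_def by metis
    then show ?thesis by (intro exI[of _ d]) (auto simp: dist_real_def intro: less_imp_le)
  qed
  define dd where "dd \<epsilon> = (SOME d. d > 0 \<and> (\<forall>s\<in>{a..b}. \<forall>t\<in>{a..b}. \<bar>s - t\<bar> < d \<longrightarrow> \<bar>H s - H t\<bar> \<le> \<epsilon>))" for \<epsilon>
  have dd: "dd \<epsilon> > 0 \<and> (\<forall>s\<in>{a..b}. \<forall>t\<in>{a..b}. \<bar>s - t\<bar> < dd \<epsilon> \<longrightarrow> \<bar>H s - H t\<bar> \<le> \<epsilon>)" if "\<epsilon> > 0" for \<epsilon>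
    unfolding dd_def by (rule someI_ex) (use uc[OF that] in blast)
  define D where "D n = Min ((\<lambda>k. dd (1 / Suc k) / 2) ` {..n})" for n
  have Dpos: "D n > 0" for n
    unfolding D_def using dd by (subst Min_gr_iff) auto
  have Dle: "D n \<le> dd (1 / Suc n) / 2" for n
    unfolding D_def by (rule Min_le) auto
  have Dmono: "D m \<le> D n" if "n \<le> m" for m n
    unfolding D_def by (rule Min_antimono) (use that in auto)
  have key: "\<bar>SS H g p - SS H g q\<bar> \<le> V / Suc N"
    if p: "p tagged_division_of {a..b}" "(\<lambda>x. ball x (D N)) fine p"
    and q: "q tagged_division_of {a..b}" "(\<lambda>x. ball x (D N)) fine q" for p q N
  proof -
    have "\<bar>SS H g p - SS H g q\<bar> \<le> (1 / Suc N) * Var g"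
    proof (rule refine[OF g p(1) q(1) p(2) q(2)])
      fix s t assume st: "s \<in> {a..b}" "t \<in> {a..b}" "\<bar>s - t\<bar> < 2 * D N"
      then have "\<bar>s - t\<bar> < dd (1 / Suc N)" using Dle[of N] by linarith
      then show "\<bar>H s - H t\<bar> \<le> 1 / Suc N" using dd[of "1 / Suc N"] st by auto
    qed simp
    then show ?thesis unfolding V_def by simp
  qed
  define P where "P n = (SOME p. p tagged_division_of {a..b} \<and> (\<lambda>x. ball x (D n)) fine p)" for n
  have P: "P n tagged_division_of {a..b} \<and> (\<lambda>x. ball x (D n)) fine P n" for n
  proof -
    obtain p where "p tagged_division_of {a..b}" "(\<lambda>x. ball x (D n)) fine p"
      using fine_division_exists_real[OF gauge_ball[OF Dpos[of n]], of a b] by metis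
    then show ?thesis unfolding P_def by (rule someI2[where Q = "\<lambda>p. p tagged_division_of {a..b} \<and> (\<lambda>x. ball x (D n)) fine p", OF conjI])
  qed
  have PN: "(\<lambda>x. ball x (D N)) fine P m" if "N \<le> m" for N m
    using fine_mono[OF Dmono[OF that]] P by blast
  have arch: "\<exists>N. V / Suc N < e" if "e > 0" for e
  proof -
    obtain N where "V / e < real N" using reals_Archimedean2 by blast
    then have "V < e * real N" using that by (simp add: field_simps)
    then have "V < e * Suc N" using that by (simp add: field_simps)
    then show ?thesis using that by (intro exI[of _ N]) (simp add: field_simps)
  qed
  define u where "u n = SS H g (P n)" for n
  have "Cauchy u"
  proof (rule metric_CauchyI)
    fix e :: real assume "e > 0"
    then obtain N where N: "V / Suc N < e" using arch by blast
    show "\<exists>M. \<forall>m\<ge>M. \<forall>n\<ge>M. dist (u m) (u n) < e"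
    proof (intro exI[of _ N] allI impI)
      fix m n assume "N \<le> m" "N \<le> n"
      then have "\<bar>u m - u n\<bar> \<le> V / Suc N" unfolding u_def using key P PN by blast
      then show "dist (u m) (u n) < e" using N by (simp add: dist_real_def)
    qed
  qed
  then obtain I where I: "u \<longlonglongrightarrow> I" using Cauchy_convergent_iff convergent_def by blast
  have close: "\<bar>SS H g p - I\<bar> \<le> V / Suc N"
    if p: "p tagged_division_of {a..b}" "(\<lambda>x. ball x (D N)) fine p" for p N
  proof (rule tendsto_upperbound)
    show "((\<lambda>m. \<bar>SS H g p - u m\<bar>) \<longlongrightarrow> \<bar>SS H g p - I\<bar>) sequentially"
      by (intro tendsto_intros I)
    show "eventually (\<lambda>m. \<bar>SS H g p - u m\<bar> \<le> V / Suc N) sequentially"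
      unfolding eventually_sequentially u_def using key[OF p] P PN by blast
  qed simp
  have "hsc H g a b I"
    unfolding hsc_def
  proof (intro allI impI)
    fix e :: real assume "e > 0"
    then obtain N where N: "V / Suc N < e" using arch by blast
    show "\<exists>d>0. \<forall>p. p tagged_division_of {a..b} \<and> (\<lambda>x. ball x d) fine p \<longrightarrow> \<bar>SS H g p - I\<bar> < e"
      using close N Dpos by (intro exI[of _ "D N"]) force
  qed
  then show ?thesis by blast
qed

lemma SS_add: "SS (\<lambda>y. H1 y + H2 y) g p = SS H1 g p + SS H2 g p"
  unfolding SS_def by (simp add: sum.distrib case_prod_unfold distrib_right)

lemma SS_cmul: "SS (\<lambda>y. c * H y) g p = c * SS H g p"
  unfolding SS_def by (simp add: sum_distrib_left case_prod_unfold mult.assoc)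

lemma hsc_add:
  assumes "hsc H1 g a b I1" "hsc H2 g a b I2"
  shows "hsc (\<lambda>y. H1 y + H2 y) g a b (I1 + I2)"
  unfolding hsc_def
proof (intro allI impI)
  fix e :: real assume "e > 0"
  then have e2: "e/2 > 0" by simp
  obtain d1 where d1: "d1 > 0" "\<And>p. p tagged_division_of {a..b} \<and> (\<lambda>x. ball x d1) fine p \<Longrightarrow> \<bar>SS H1 g p - I1\<bar> < e/2"
    using assms(1) e2 unfolding hsc_def by meson
  obtain d2 where d2: "d2 > 0" "\<And>p. p tagged_division_of {a..b} \<and> (\<lambda>x. ball x d2) fine p \<Longrightarrow> \<bar>SS H2 g p - I2\<bar> < e/2"
    using assms(2) e2 unfolding hsc_def by meson
  show "\<exists>d>0. \<forall>p. p tagged_division_of {a..b} \<and> (\<lambda>x. ball x d) fine p \<longrightarrow> \<bar>SS (\<lambda>y. H1 y + H2 y) g p - (I1 + I2)\<bar> < e"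
  proof (intro exI[of _ "min d1 d2"] conjI allI impI)
    show "min d1 d2 > 0" using d1 d2 by simp
    fix p assume p: "p tagged_division_of {a..b} \<and> (\<lambda>x. ball x (min d1 d2)) fine p"
    have "(\<lambda>x. ball x d1) fine p" "(\<lambda>x. ball x d2) fine p"
      using fine_mono[of "min d1 d2" d1 p] fine_mono[of "min d1 d2" d2 p] p by auto
    then have "\<bar>SS H1 g p - I1\<bar> < e/2" "\<bar>SS H2 g p - I2\<bar> < e/2"
      using d1(2) d2(2) p by auto
    then show "\<bar>SS (\<lambda>y. H1 y + H2 y) g p - (I1 + I2)\<bar> < e" unfolding SS_add by linarith
  qed
qed

lemma hsc_cmul:
  assumes "hsc H g a b I"
  shows "hsc (\<lambda>y. c * H y) g a b (c * I)"
  unfolding hsc_def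
proof (intro allI impI)
  fix e :: real assume "e > 0"
  then have e2: "e / (\<bar>c\<bar> + 1) > 0" by simp
  obtain d where d: "d > 0" "\<And>p. p tagged_division_of {a..b} \<and> (\<lambda>x. ball x d) fine p \<Longrightarrow> \<bar>SS H g p - I\<bar> < e / (\<bar>c\<bar> + 1)"
    using assms e2 unfolding hsc_def by meson
  show "\<exists>d>0. \<forall>p. p tagged_division_of {a..b} \<and> (\<lambda>x. ball x d) fine p \<longrightarrow> \<bar>SS (\<lambda>y. c * H y) g p - c * I\<bar> < e"
  proof (intro exI[of _ d] conjI allI impI)
    show "d > 0" by (rule d(1))
    fix p assume p: "p tagged_division_of {a..b} \<and> (\<lambda>x. ball x d) fine p"
    then have 1: "\<bar>SS H g p - I\<bar> < e / (\<bar>c\<bar> + 1)" using d(2) by blast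
    have "\<bar>SS (\<lambda>y. c * H y) g p - c * I\<bar> = \<bar>c\<bar> * \<bar>SS H g p - I\<bar>"
      unfolding SS_cmul by (simp add: abs_mult[symmetric] right_diff_distrib)
    also have "\<dots> \<le> \<bar>c\<bar> * (e / (\<bar>c\<bar> + 1))" using 1 by (intro mult_left_mono) auto
    also have "\<dots> < e" using \<open>e > 0\<close> by (simp add: field_simps)
    finally show "\<bar>SS (\<lambda>y. c * H y) g p - c * I\<bar> < e" .
  qed
qed

lemma hsc_const:
  assumes "a \<le> b"
  shows "hsc (\<lambda>y. c) g a b (c * (g b - g a))"
  unfolding hsc_def
proof (intro allI impI)
  fix e :: real assume "e > 0"
  have "SS (\<lambda>y. c) g p = c * (g b - g a)" if "p tagged_division_of {a..b}" for p
  proof -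
    have "SS (\<lambda>y. c) g p = c * (\<Sum>(x,K)\<in>p. g (Sup K) - g (Inf K))"
      unfolding SS_def by (simp add: sum_distrib_left case_prod_unfold)
    also have "\<dots> = c * (g b - g a)" using additive_tagged_division_1[OF assms that, of g] by simp
    finally show ?thesis .
  qed
  then show "\<exists>d>0. \<forall>p. p tagged_division_of {a..b} \<and> (\<lambda>x. ball x d) fine p \<longrightarrow> \<bar>SS (\<lambda>y. c) g p - c * (g b - g a)\<bar> < e"
    using \<open>e > 0\<close> by (intro exI[of _ 1]) auto
qed

lemma SS_union:
  assumes p1: "p1 tagged_division_of {a..b}" and p2: "p2 tagged_division_of {b..c}"
  shows "SS H g (p1 \<union> p2) = SS H g p1 + SS H g p2"
proof -
  have fin: "finite p1" "finite p2" using p1 p2 by auto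
  have z: "(\<Sum>(t,K)\<in>p1 \<inter> p2. H t * (g (Sup K) - g (Inf K))) = 0"
  proof (rule sum.neutral, clarify)
    fix t K assume tK: "(t,K) \<in> p1" "(t,K) \<in> p2"
    have "K \<subseteq> {a..b}" "K \<subseteq> {b..c}" "t \<in> K" using p1 p2 tK by auto
    then have "K = {b}" by (auto simp: subset_iff) (metis atLeastAtMost_iff order_antisym)+
    then show "H t * (g (Sup K) - g (Inf K)) = 0" by simp
  qed
  show ?thesis unfolding SS_def using sum.union_inter[OF fin, of "\<lambda>(t,K). H t * (g (Sup K) - g (Inf K))"] z
    by simp
qed

lemma abs3_aux: "\<bar>x - i1\<bar> < \<bar>i - (i1 + i2)\<bar> / 3 \<Longrightarrow> \<bar>y - i2\<bar> < \<bar>i - (i1 + i2)\<bar> / 3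
  \<Longrightarrow> \<bar>x + y - i\<bar> < \<bar>i - (i1 + i2)\<bar> / 3 \<Longrightarrow> False" for x y i i1 i2 :: real
  by (cases "x \<ge> i1"; cases "y \<ge> i2"; cases "x + y \<ge> i"; cases "i \<ge> i1 + i2"; simp)

lemma hsc_additive:
  assumes ab: "a \<le> b" "b \<le> c" and I1: "hsc H g a b I1" and I2: "hsc H g b c I2" and I: "hsc H g a c I"
  shows "I = I1 + I2"
proof (rule ccontr)
  assume ne: "I \<noteq> I1 + I2"
  define e where "e = \<bar>I - (I1 + I2)\<bar> / 3"
  have e: "e > 0" using ne unfolding e_def by simp
  obtain d1 where d1: "d1 > 0" "\<And>p. p tagged_division_of {a..b} \<and> (\<lambda>x. ball x d1) fine p \<Longrightarrow> \<bar>SS H g p - I1\<bar> < e"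
    using I1 e unfolding hsc_def by meson
  obtain d2 where d2: "d2 > 0" "\<And>p. p tagged_division_of {b..c} \<and> (\<lambda>x. ball x d2) fine p \<Longrightarrow> \<bar>SS H g p - I2\<bar> < e"
    using I2 e unfolding hsc_def by meson
  obtain d3 where d3: "d3 > 0" "\<And>p. p tagged_division_of {a..c} \<and> (\<lambda>x. ball x d3) fine p \<Longrightarrow> \<bar>SS H g p - I\<bar> < e"
    using I e unfolding hsc_def by meson
  define d where "d = min d1 (min d2 d3)"
  have d: "d > 0" using d1 d2 d3 d_def by simp
  obtain p1 where p1: "p1 tagged_division_of {a..b}" "(\<lambda>x. ball x d) fine p1"
    using fine_division_exists_real[OF gauge_ball[OF d], of a b] by metis
  obtain p2 where p2: "p2 tagged_division_of {b..c}" "(\<lambda>x. ball x d) fine p2"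
    using fine_division_exists_real[OF gauge_ball[OF d], of b c] by metis
  have "interior {a..b} \<inter> interior {b..c} = {}" by auto
  then have "(p1 \<union> p2) tagged_division_of ({a..b} \<union> {b..c})"
    using tagged_division_Un[OF p1(1) p2(1)] by blast
  moreover have "{a..b} \<union> {b..c} = {a..c}" using ab by auto
  ultimately have p: "(p1 \<union> p2) tagged_division_of {a..c}" by simp
  have fp: "(\<lambda>x. ball x d) fine (p1 \<union> p2)" using fine_Un p1 p2 by blast
  have "d \<le> d1" "d \<le> d2" "d \<le> d3" unfolding d_def by auto
  then have "(\<lambda>x. ball x d1) fine p1" "(\<lambda>x. ball x d2) fine p2" "(\<lambda>x. ball x d3) fine (p1 \<union> p2)"
    using fine_mono p1(2) p2(2) fp by blast+
  then have "\<bar>SS H g p1 - I1\<bar> < e" "\<bar>SS H g p2 - I2\<bar> < e" "\<bar>SS H g (p1 \<union> p2) - I\<bar> < e"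
    using d1(2) d2(2) d3(2) p1(1) p2(1) p by auto
  then show False unfolding SS_union[OF p1(1) p2(1)] e_def by (rule abs3_aux)
qed

lemma hsc_bound:
  assumes ab: "a \<le> b" and I: "hsc H g a b I" and M: "\<And>y. y \<in> {a..b} \<Longrightarrow> \<bar>H y\<bar> \<le> M"
    and W: "\<And>s. s \<in> fams g {a..b} \<Longrightarrow> s \<le> W"
  shows "\<bar>I\<bar> \<le> M * W"
proof (rule field_le_epsilon)
  fix e :: real assume "e > 0"
  obtain d where d: "d > 0" "\<And>p. p tagged_division_of {a..b} \<and> (\<lambda>x. ball x d) fine p \<Longrightarrow> \<bar>SS H g p - I\<bar> < e"
    using I \<open>e > 0\<close> unfolding hsc_def by meson
  obtain p where p: "p tagged_division_of {a..b}" "(\<lambda>x. ball x d) fine p"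
    using fine_division_exists_real[OF gauge_ball[OF d(1)], of a b] by metis
  have M0: "0 \<le> M" using M[of a] ab by force
  have inf: "(\<Sum>z\<in>p. \<bar>phi' g (snd z)\<bar>) \<in> fams g {a..b}"
  proof (rule fam_sum)
    show "finite p" using p by auto
    fix z assume z: "z \<in> p"
    obtain t K where zz: "z = (t,K)" by fastforce
    show "\<exists>u v. snd z = {u..v}" using tdiv_ivl[OF p(1)] z zz by fastforce
    show "snd z \<subseteq> {a..b}" using p(1) z zz by auto
  next
    fix z w assume zw: "z \<in> p" "w \<in> p" "z \<noteq> w"
    then show "interior (snd z) \<inter> interior (snd w) = {}"
      using tagged_division_ofD(5)[OF p(1), of "fst z" "snd z" "fst w" "snd w"] by simp
  qed
  have "\<bar>SS H g p\<bar> \<le> (\<Sum>z\<in>p. \<bar>H (fst z)\<bar> * \<bar>phi' g (snd z)\<bar>)"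
    unfolding SS_def case_prod_unfold
    by (rule order_trans[OF sum_abs]) (use tag_phi'[OF p(1)] in \<open>auto simp: abs_mult intro!: sum_mono\<close>)
  also have "\<dots> \<le> (\<Sum>z\<in>p. M * \<bar>phi' g (snd z)\<bar>)"
  proof (rule sum_mono)
    fix z assume "z \<in> p"
    then have "fst z \<in> {a..b}" using tag_in_interval[OF p(1), of "fst z" "snd z"] by simp
    then show "\<bar>H (fst z)\<bar> * \<bar>phi' g (snd z)\<bar> \<le> M * \<bar>phi' g (snd z)\<bar>"
      using M by (intro mult_right_mono) auto
  qed
  also have "\<dots> = M * (\<Sum>z\<in>p. \<bar>phi' g (snd z)\<bar>)" by (simp add: sum_distrib_left)
  also have "\<dots> \<le> M * W" using W[OF inf] M0 by (intro mult_left_mono)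
  finally have "\<bar>SS H g p\<bar> \<le> M * W" .
  moreover have "\<bar>SS H g p - I\<bar> < e" using d(2) p by blast
  ultimately show "\<bar>I\<bar> \<le> M * W + e" by linarith
qed



lemma tdiv_image:
  fixes m :: "real \<Rightarrow> real"
  assumes p: "p tagged_division_of S" and inj: "inj m" and cont: "\<And>x. continuous (at x) m"
    and iv: "\<And>u v. \<exists>w z. m ` {u..v} = {w..z}"
  shows "(\<lambda>(x,K). (m x, m ` K)) ` p tagged_division_of (m ` S)"
proof (rule tagged_division_ofI)
  show "finite ((\<lambda>(x,K). (m x, m ` K)) ` p)" using p by auto
next
  fix x K assume "(x,K) \<in> (\<lambda>(x,K). (m x, m ` K)) ` p"
  then obtain y L where yL: "(y,L) \<in> p" "x = m y" "K = m ` L" by auto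
  show "x \<in> K" using yL p by auto
  show "K \<subseteq> m ` S" using yL p by auto
  obtain u v where "L = cbox u v" using p yL by blast
  then show "\<exists>a b. K = cbox a b" using iv[of u v] yL by auto
next
  fix x1 K1 x2 K2
  assume a1: "(x1,K1) \<in> (\<lambda>(x,K). (m x, m ` K)) ` p" and a2: "(x2,K2) \<in> (\<lambda>(x,K). (m x, m ` K)) ` p"
    and ne: "(x1,K1) \<noteq> (x2,K2)"
  obtain y1 L1 where y1: "(y1,L1) \<in> p" "x1 = m y1" "K1 = m ` L1" using a1 by auto
  obtain y2 L2 where y2: "(y2,L2) \<in> p" "x2 = m y2" "K2 = m ` L2" using a2 by auto
  have "(y1,L1) \<noteq> (y2,L2)" using ne y1 y2 by auto
  then have "interior L1 \<inter> interior L2 = {}" using p y1 y2 by (meson tagged_division_ofD(5))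
  then have "m ` interior L1 \<inter> m ` interior L2 = {}" using inj by (simp add: image_Int[symmetric])
  moreover have "interior K1 \<subseteq> m ` interior L1" "interior K2 \<subseteq> m ` interior L2"
    using interior_image_subset[OF inj cont] y1 y2 by auto
  ultimately show "interior K1 \<inter> interior K2 = {}" by blast
next
  show "\<Union>{K. \<exists>x. (x,K) \<in> (\<lambda>(x,K). (m x, m ` K)) ` p} = m ` S"
  proof -
    have "\<Union>{K. \<exists>x. (x,K) \<in> p} = S" using p by auto
    moreover have "{K. \<exists>x. (x,K) \<in> (\<lambda>(x,K). (m x, m ` K)) ` p} = (\<lambda>K. m ` K) ` {K. \<exists>x. (x,K) \<in> p}"
      by force
    ultimately show ?thesis by (metis image_Union)
  qed
qed

lemma ivl_sup_inf: "u \<le> v \<Longrightarrow> Sup {u..v} = v \<and> Inf {u..v} = (u::real)"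
  by simp

lemma hsc_reflect:
  assumes I: "hsc H g a b I"
  shows "hsc (\<lambda>y. H (c - y)) (\<lambda>y. g (c - y)) (c - b) (c - a) (- I)"
  unfolding hsc_def
proof (intro allI impI)
  fix e :: real assume "e > 0"
  then obtain d where d: "d > 0" "\<And>p. p tagged_division_of {a..b} \<and> (\<lambda>x. ball x d) fine p \<Longrightarrow> \<bar>SS H g p - I\<bar> < e"
    using I unfolding hsc_def by meson
  show "\<exists>d>0. \<forall>p. p tagged_division_of {c - b..c - a} \<and> (\<lambda>x. ball x d) fine p \<longrightarrow>
      \<bar>SS (\<lambda>y. H (c - y)) (\<lambda>y. g (c - y)) p - - I\<bar> < e"
  proof (intro exI[of _ d] conjI allI impI)
    show "d > 0" by (rule d(1))
    fix p assume pp: "p tagged_division_of {c - b..c - a} \<and> (\<lambda>x. ball x d) fine p"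
    define m where "m = (\<lambda>y::real. c - y)"
    have inj: "inj m" unfolding m_def by (auto intro: injI)
    have cont: "continuous (at x) m" for x unfolding m_def by (intro continuous_intros)
    have iv: "\<exists>w z. m ` {u..v} = {w..z}" for u v unfolding m_def
      using image_diff_atLeastAtMost[of c u v] by auto
    define q where "q = (\<lambda>(x,K). (m x, m ` K)) ` p"
    have "q tagged_division_of (m ` {c - b..c - a})"
      unfolding q_def by (rule tdiv_image[OF conjunct1[OF pp] inj cont iv])
    moreover have "m ` {c - b..c - a} = {a..b}" unfolding m_def
      using image_diff_atLeastAtMost[of c "c - b" "c - a"] by simp
    ultimately have q: "q tagged_division_of {a..b}" by simp
    have fq: "(\<lambda>x. ball x d) fine q"
      unfolding q_def fine_def
    proof clarify
      fix x K y assume xK: "(x,K) \<in> p" "y \<in> K"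
      then have "y \<in> ball x d" using pp fineD by blast
      then show "m y \<in> ball (m x) d" unfolding m_def by (simp add: dist_real_def abs_minus_commute)
    qed
    have injp: "inj_on (\<lambda>(x,K). (m x, m ` K)) p"
      using inj unfolding inj_on_def inj_def by (auto simp: inj_image_eq_iff[OF inj])
    have "SS H g q = (\<Sum>(x,K)\<in>p. H (m x) * (g (Sup (m ` K)) - g (Inf (m ` K))))"
      unfolding SS_def q_def by (subst sum.reindex[OF injp]) (simp add: case_prod_unfold)
    also have "\<dots> = (\<Sum>(x,K)\<in>p. - (H (c - x) * (g (c - Sup K) - g (c - Inf K))))"
    proof (rule sum.cong[OF refl], clarify)
      fix x K assume "(x,K) \<in> p"
      then obtain u v where K: "K = {u..v}" "u \<le> v" using tdiv_ivl[OF conjunct1[OF pp]] by blast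
      have "m ` K = {c - v..c - u}" unfolding m_def K using image_diff_atLeastAtMost[of c u v] by simp
      then show "H (m x) * (g (Sup (m ` K)) - g (Inf (m ` K))) = - (H (c - x) * (g (c - Sup K) - g (c - Inf K)))"
        using K unfolding m_def by (simp add: algebra_simps)
    qed
    also have "\<dots> = - SS (\<lambda>y. H (c - y)) (\<lambda>y. g (c - y)) p"
      unfolding SS_def by (simp add: sum_negf case_prod_unfold)
    finally have "SS H g q = - SS (\<lambda>y. H (c - y)) (\<lambda>y. g (c - y)) p" .
    moreover have "\<bar>SS H g q - I\<bar> < e" using d(2) q fq by blast
    ultimately show "\<bar>SS (\<lambda>y. H (c - y)) (\<lambda>y. g (c - y)) p - - I\<bar> < e"
      by (simp add: abs_minus_commute)
  qed
qed

lemma hsc_transl: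
  assumes I: "hsc H g a b I"
  shows "hsc (\<lambda>y. H (y + c)) (\<lambda>y. g (y + c)) (a - c) (b - c) I"
  unfolding hsc_def
proof (intro allI impI)
  fix e :: real assume "e > 0"
  then obtain d where d: "d > 0" "\<And>p. p tagged_division_of {a..b} \<and> (\<lambda>x. ball x d) fine p \<Longrightarrow> \<bar>SS H g p - I\<bar> < e"
    using I unfolding hsc_def by meson
  show "\<exists>d>0. \<forall>p. p tagged_division_of {a - c..b - c} \<and> (\<lambda>x. ball x d) fine p \<longrightarrow>
      \<bar>SS (\<lambda>y. H (y + c)) (\<lambda>y. g (y + c)) p - I\<bar> < e"
  proof (intro exI[of _ d] conjI allI impI)
    show "d > 0" by (rule d(1))
    fix p assume pp: "p tagged_division_of {a - c..b - c} \<and> (\<lambda>x. ball x d) fine p"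
    define m where "m = (\<lambda>y::real. y + c)"
    have inj: "inj m" unfolding m_def by (auto intro: injI)
    have cont: "continuous (at x) m" for x unfolding m_def by (intro continuous_intros)
    have iv: "\<exists>w z. m ` {u..v} = {w..z}" for u v unfolding m_def
      using image_add_atLeastAtMost'[of c u v] by auto
    define q where "q = (\<lambda>(x,K). (m x, m ` K)) ` p"
    have "q tagged_division_of (m ` {a - c..b - c})"
      unfolding q_def by (rule tdiv_image[OF conjunct1[OF pp] inj cont iv])
    moreover have "m ` {a - c..b - c} = {a..b}" unfolding m_def
      using image_add_atLeastAtMost'[of c "a - c" "b - c"] by simp
    ultimately have q: "q tagged_division_of {a..b}" by simp
    have fq: "(\<lambda>x. ball x d) fine q"
      unfolding q_def fine_def
    proof clarify
      fix x K y assume xK: "(x,K) \<in> p" "y \<in> K"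
      then have "y \<in> ball x d" using pp fineD by blast
      then show "m y \<in> ball (m x) d" unfolding m_def by (simp add: dist_real_def)
    qed
    have injp: "inj_on (\<lambda>(x,K). (m x, m ` K)) p"
      using inj unfolding inj_on_def inj_def by (auto simp: inj_image_eq_iff[OF inj])
    have "SS H g q = (\<Sum>(x,K)\<in>p. H (m x) * (g (Sup (m ` K)) - g (Inf (m ` K))))"
      unfolding SS_def q_def by (subst sum.reindex[OF injp]) (simp add: case_prod_unfold)
    also have "\<dots> = (\<Sum>(x,K)\<in>p. H (x + c) * (g (Sup K + c) - g (Inf K + c)))"
    proof (rule sum.cong[OF refl], clarify)
      fix x K assume "(x,K) \<in> p"
      then obtain u v where K: "K = {u..v}" "u \<le> v" using tdiv_ivl[OF conjunct1[OF pp]] by blast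
      have "m ` K = {u + c..v + c}" unfolding m_def K using image_add_atLeastAtMost'[of c u v] by simp
      then show "H (m x) * (g (Sup (m ` K)) - g (Inf (m ` K))) = H (x + c) * (g (Sup K + c) - g (Inf K + c))"
        using K unfolding m_def by simp
    qed
    also have "\<dots> = SS (\<lambda>y. H (y + c)) (\<lambda>y. g (y + c)) p"
      unfolding SS_def by (simp add: case_prod_unfold)
    finally have "SS H g q = SS (\<lambda>y. H (y + c)) (\<lambda>y. g (y + c)) p" .
    moreover have "\<bar>SS H g q - I\<bar> < e" using d(2) q fq by blast
    ultimately show "\<bar>SS (\<lambda>y. H (y + c)) (\<lambda>y. g (y + c)) p - I\<bar> < e" by simp
  qed
qed



lemma var_sums_fams: "var_sums g = fams g UNIV"
  unfolding var_sums_def fams_def by auto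

lemma fams_union:
  assumes s1: "s1 \<in> fams g A1" and s2: "s2 \<in> fams g A2" and sep: "\<And>x y. x \<in> A1 \<Longrightarrow> y \<in> A2 \<Longrightarrow> x \<le> y"
  shows "s1 + s2 \<in> fams g (A1 \<union> A2)"
proof -
  obtain S1 where S1: "s1 = (\<Sum>(x,y)\<in>S1. \<bar>g x - g y\<bar>)" "finite S1" "\<forall>(x,y)\<in>S1. x < y \<and> x \<in> A1 \<and> y \<in> A1"
    "\<forall>p\<in>S1. \<forall>q\<in>S1. p \<noteq> q \<longrightarrow> {fst p<..<snd p} \<inter> {fst q<..<snd q} = {}"
    using s1 unfolding fams_def by blast
  obtain S2 where S2: "s2 = (\<Sum>(x,y)\<in>S2. \<bar>g x - g y\<bar>)" "finite S2" "\<forall>(x,y)\<in>S2. x < y \<and> x \<in> A2 \<and> y \<in> A2"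
    "\<forall>p\<in>S2. \<forall>q\<in>S2. p \<noteq> q \<longrightarrow> {fst p<..<snd p} \<inter> {fst q<..<snd q} = {}"
    using s2 unfolding fams_def by blast
  have P1: "fst p < snd p \<and> fst p \<in> A1 \<and> snd p \<in> A1" if "p \<in> S1" for p
    using S1(3) that by (cases p) auto
  have P2: "fst p < snd p \<and> fst p \<in> A2 \<and> snd p \<in> A2" if "p \<in> S2" for p
    using S2(3) that by (cases p) auto
  have dj: "S1 \<inter> S2 = {}"
  proof (rule ccontr)
    assume "S1 \<inter> S2 \<noteq> {}"
    then obtain p where "p \<in> S1" "p \<in> S2" by blast
    then show False using P1 P2 sep[of "snd p" "fst p"] by fastforce
  qed
  have "s1 + s2 = (\<Sum>(x,y)\<in>S1 \<union> S2. \<bar>g x - g y\<bar>)"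
    using S1(1,2) S2(1,2) dj by (simp add: sum.union_disjoint)
  moreover have "finite (S1 \<union> S2)" using S1 S2 by simp
  moreover have "\<forall>(x,y)\<in>S1 \<union> S2. x < y \<and> x \<in> A1 \<union> A2 \<and> y \<in> A1 \<union> A2"
    using S1(3) S2(3) by blast
  moreover have "\<forall>p\<in>S1 \<union> S2. \<forall>q\<in>S1 \<union> S2. p \<noteq> q \<longrightarrow> {fst p<..<snd p} \<inter> {fst q<..<snd q} = {}"
  proof (intro ballI impI)
    fix p q assume pq: "p \<in> S1 \<union> S2" "q \<in> S1 \<union> S2" "p \<noteq> q"
    show "{fst p<..<snd p} \<inter> {fst q<..<snd q} = {}"
    proof (cases "p \<in> S1")
      case True
      show ?thesis
      proof (cases "q \<in> S1")
        case True with \<open>p \<in> S1\<close> pq S1(4) show ?thesis by blast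
      next
        case False
        then have "q \<in> S2" using pq by blast
        then have "snd p \<le> fst q" using sep P1[OF \<open>p \<in> S1\<close>] P2 by blast
        then show ?thesis by auto
      qed
    next
      case False
      then have p2: "p \<in> S2" using pq by blast
      show ?thesis
      proof (cases "q \<in> S2")
        case True with p2 pq S2(4) show ?thesis by blast
      next
        case False
        then have "q \<in> S1" using pq by blast
        then have "snd q \<le> fst p" using sep P1 P2[OF p2] by blast
        then show ?thesis by auto
      qed
    qed
  qed
  ultimately show ?thesis unfolding fams_def by blast
qed

lemma split_Var:
  assumes g: "is_BV g" and "s1 \<in> fams g {..y0}" "s2 \<in> fams g {y0..}"
  shows "s1 + s2 \<le> Var g"
proof -
  have "s1 + s2 \<in> fams g ({..y0} \<union> {y0..})" by (rule fams_union[OF assms(2,3)]) auto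
  then show ?thesis using fams_le_Var[OF g] by blast
qed

lemma var_elem:
  assumes g: "is_BV g" and e: "e > 0"
  obtains S where "finite S" "\<forall>(x,y)\<in>S. x < y"
    "\<forall>p\<in>S. \<forall>q\<in>S. p \<noteq> q \<longrightarrow> {fst p<..<snd p} \<inter> {fst q<..<snd q} = {}"
    "Var g - e < (\<Sum>(x,y)\<in>S. \<bar>g x - g y\<bar>)"
proof -
  have ne: "var_sums g \<noteq> {}" using zero_fams fams_sub_var by blast
  have "Var g - e < Sup (var_sums g)" using e unfolding Var_def by simp
  then obtain s where "s \<in> var_sums g" "Var g - e < s"
    using less_cSup_iff[OF ne] g unfolding is_BV_def by blast
  then show ?thesis using that unfolding var_sums_def by blast
qed

lemma tail_top:
  assumes g: "is_BV g" and e: "e > 0"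
  shows "\<exists>B. \<forall>s\<in>fams g {B..}. s \<le> e"
proof -
  obtain S where S: "finite S" "\<forall>(x,y)\<in>S. x < y"
    "\<forall>p\<in>S. \<forall>q\<in>S. p \<noteq> q \<longrightarrow> {fst p<..<snd p} \<inter> {fst q<..<snd q} = {}"
    "Var g - e < (\<Sum>(x,y)\<in>S. \<bar>g x - g y\<bar>)" using var_elem[OF g e] by blast
  define B where "B = Max (insert 0 (snd ` S))"
  have le: "snd p \<le> B" "fst p \<le> B" if "p \<in> S" for p
  proof -
    show "snd p \<le> B" unfolding B_def using S(1) that by (intro Max_ge) auto
    then show "fst p \<le> B" using S(2) that by (cases p) auto
  qed
  have "\<forall>(x,y)\<in>S. x < y \<and> x \<in> {..B} \<and> y \<in> {..B}"
  proof (intro ballI)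
    fix z assume z: "z \<in> S"
    show "case z of (x,y) \<Rightarrow> x < y \<and> x \<in> {..B} \<and> y \<in> {..B}"
      using S(2) le[OF z] z by (cases z) auto
  qed
  then have "(\<Sum>(x,y)\<in>S. \<bar>g x - g y\<bar>) \<in> fams g {..B}"
    unfolding fams_def using S(1,3) by blast
  have "s \<le> e" if s: "s \<in> fams g {B..}" for s
  proof -
    have "(\<Sum>(x,y)\<in>S. \<bar>g x - g y\<bar>) + s \<in> fams g ({..B} \<union> {B..})"
      by (rule fams_union[OF \<open>(\<Sum>(x,y)\<in>S. \<bar>g x - g y\<bar>) \<in> fams g {..B}\<close> s]) auto
    then have "(\<Sum>(x,y)\<in>S. \<bar>g x - g y\<bar>) + s \<le> Var g" using fams_le_Var[OF g] by blast
    then show ?thesis using S(4) by linarith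
  qed
  then show ?thesis by blast
qed

lemma tail_bot:
  assumes g: "is_BV g" and e: "e > 0"
  shows "\<exists>B. \<forall>s\<in>fams g {..B}. s \<le> e"
proof -
  obtain S where S: "finite S" "\<forall>(x,y)\<in>S. x < y"
    "\<forall>p\<in>S. \<forall>q\<in>S. p \<noteq> q \<longrightarrow> {fst p<..<snd p} \<inter> {fst q<..<snd q} = {}"
    "Var g - e < (\<Sum>(x,y)\<in>S. \<bar>g x - g y\<bar>)" using var_elem[OF g e] by blast
  define B where "B = Min (insert 0 (fst ` S))"
  have le: "B \<le> fst p" "B \<le> snd p" if "p \<in> S" for p
  proof -
    show "B \<le> fst p" unfolding B_def using S(1) that by (intro Min_le) auto
    then show "B \<le> snd p" using S(2) that by (cases p) auto
  qed
  have "\<forall>(x,y)\<in>S. x < y \<and> x \<in> {B..} \<and> y \<in> {B..}"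
  proof (intro ballI)
    fix z assume z: "z \<in> S"
    show "case z of (x,y) \<Rightarrow> x < y \<and> x \<in> {B..} \<and> y \<in> {B..}"
      using S(2) le[OF z] z by (cases z) auto
  qed
  then have "(\<Sum>(x,y)\<in>S. \<bar>g x - g y\<bar>) \<in> fams g {B..}"
    unfolding fams_def using S(1,3) by blast
  have "s \<le> e" if s: "s \<in> fams g {..B}" for s
  proof -
    have "s + (\<Sum>(x,y)\<in>S. \<bar>g x - g y\<bar>) \<in> fams g ({..B} \<union> {B..})"
      by (rule fams_union[OF s \<open>(\<Sum>(x,y)\<in>S. \<bar>g x - g y\<bar>) \<in> fams g {B..}\<close>]) auto
    then have "s + (\<Sum>(x,y)\<in>S. \<bar>g x - g y\<bar>) \<le> Var g" using fams_le_Var[OF g] by blast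
    then show ?thesis using S(4) by linarith
  qed
  then show ?thesis by blast
qed

lemma pair_fam:
  assumes "s \<in> A" "t \<in> A" shows "\<bar>g s - g t\<bar> \<in> fams g A"
proof (cases "s = t")
  case True then show ?thesis using zero_fams by simp
next
  case False
  define S where "S = {(min s t, max s t)}"
  have "\<bar>g s - g t\<bar> = (\<Sum>(x,y)\<in>S. \<bar>g x - g y\<bar>)"
    unfolding S_def by (auto simp: min_def max_def abs_minus_commute)
  moreover have "finite S" "\<forall>(x,y)\<in>S. x < y \<and> x \<in> A \<and> y \<in> A"
    using False assms unfolding S_def by (auto simp: min_def max_def)
  moreover have "\<forall>p\<in>S. \<forall>q\<in>S. p \<noteq> q \<longrightarrow> {fst p<..<snd p} \<inter> {fst q<..<snd q} = {}"
    unfolding S_def by simp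
  ultimately show ?thesis unfolding fams_def by blast
qed

lemma cauchy_top:
  fixes f :: "real \<Rightarrow> real"
  assumes C: "\<And>e. e > 0 \<Longrightarrow> \<exists>B. \<forall>s t. B \<le> s \<longrightarrow> B \<le> t \<longrightarrow> \<bar>f s - f t\<bar> \<le> e"
  shows "\<exists>L. (f \<longlongrightarrow> L) at_top"
proof -
  define u where "u n = f (real n)" for n
  have "Cauchy u"
  proof (rule metric_CauchyI)
    fix e :: real assume "e > 0"
    then obtain B where B: "\<forall>s t. B \<le> s \<longrightarrow> B \<le> t \<longrightarrow> \<bar>f s - f t\<bar> \<le> e/2"
      using C[of "e/2"] by auto
    obtain M :: nat where M: "B \<le> real M" using real_arch_simple by blast
    show "\<exists>M. \<forall>m\<ge>M. \<forall>n\<ge>M. dist (u m) (u n) < e"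
    proof (intro exI[of _ M] allI impI)
      fix m n assume "M \<le> m" "M \<le> n"
      then have "B \<le> real m" "B \<le> real n" using M by linarith+
      then have "\<bar>u m - u n\<bar> \<le> e/2" using B unfolding u_def by blast
      then show "dist (u m) (u n) < e" using \<open>e > 0\<close> by (simp add: dist_real_def)
    qed
  qed
  then obtain L where L: "u \<longlonglongrightarrow> L" using Cauchy_convergent_iff convergent_def by blast
  have "(f \<longlongrightarrow> L) at_top"
  proof (rule tendstoI)
    fix e :: real assume "e > 0"
    then obtain B where B: "\<forall>s t. B \<le> s \<longrightarrow> B \<le> t \<longrightarrow> \<bar>f s - f t\<bar> \<le> e/2"
      using C[of "e/2"] by auto
    have "\<bar>f t - L\<bar> \<le> e/2" if t: "B \<le> t" for t
    proof (rule tendsto_upperbound)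
      show "((\<lambda>n. \<bar>f t - u n\<bar>) \<longlongrightarrow> \<bar>f t - L\<bar>) sequentially" by (intro tendsto_intros L)
      obtain M :: nat where M: "B \<le> real M" using real_arch_simple by blast
      show "eventually (\<lambda>n. \<bar>f t - u n\<bar> \<le> e/2) sequentially"
        unfolding eventually_sequentially
      proof (intro exI[of _ M] allI impI)
        fix n assume "M \<le> n"
        then have "B \<le> real n" using M by (meson of_nat_le_iff order_trans)
        then show "\<bar>f t - u n\<bar> \<le> e/2" using B t unfolding u_def by blast
      qed
    qed simp
    then show "eventually (\<lambda>t. dist (f t) L < e) at_top"
      unfolding eventually_at_top_linorder dist_real_def using \<open>e > 0\<close>
    proof (intro exI[of _ B] allI impI)
      fix t assume "B \<le> t"
      then have "\<bar>f t - L\<bar> \<le> e/2" by fact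
      then show "\<bar>f t - L\<bar> < e" using \<open>e > 0\<close> by linarith
    qed
  qed
  then show ?thesis by blast
qed

lemma BV_lim_top:
  assumes g: "is_BV g" shows "(g \<longlongrightarrow> lim_top g) at_top"
proof -
  have "\<exists>L. (g \<longlongrightarrow> L) at_top"
  proof (rule cauchy_top)
    fix e :: real assume "e > 0"
    then obtain B where B: "\<forall>s\<in>fams g {B..}. s \<le> e" using tail_top[OF g] by blast
    show "\<exists>B. \<forall>s t. B \<le> s \<longrightarrow> B \<le> t \<longrightarrow> \<bar>g s - g t\<bar> \<le> e"
      using B pair_fam[of _ "{B..}" _ g] by (intro exI[of _ B]) auto
  qed
  then obtain L where L: "(g \<longlongrightarrow> L) at_top" by blast
  then have "lim_top g = L" unfolding lim_top_def by (intro tendsto_Lim) auto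
  then show ?thesis using L by simp
qed

lemma BV_lim_bot:
  assumes g: "is_BV g" shows "(g \<longlongrightarrow> lim_bot g) at_bot"
proof -
  have "\<exists>L. ((\<lambda>t. g (- t)) \<longlongrightarrow> L) at_top"
  proof (rule cauchy_top)
    fix e :: real assume "e > 0"
    then obtain B where B: "\<forall>s\<in>fams g {..B}. s \<le> e" using tail_bot[OF g] by blast
    have "\<bar>g (- s) - g (- t)\<bar> \<le> e" if "- B \<le> s" "- B \<le> t" for s t
      using B pair_fam[of "- s" "{..B}" "- t" g] that by auto
    then show "\<exists>B. \<forall>s t. B \<le> s \<longrightarrow> B \<le> t \<longrightarrow> \<bar>g (- s) - g (- t)\<bar> \<le> e" by blast
  qed
  then obtain L where L: "((\<lambda>t. g (- t)) \<longlongrightarrow> L) at_top" by blast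
  then have L': "(g \<longlongrightarrow> L) at_bot" unfolding filterlim_at_bot_mirror by simp
  then have "lim_bot g = L" unfolding lim_bot_def by (intro tendsto_Lim) auto
  then show ?thesis using L' by simp
qed



lemma abs_tri2: "\<bar>a - c\<bar> \<le> x \<Longrightarrow> \<bar>b - c\<bar> \<le> y \<Longrightarrow> \<bar>a - b\<bar> \<le> x + y" for a b c x y :: real
  by (simp add: abs_le_iff)

definition UT :: "(real \<Rightarrow> real \<Rightarrow> real) \<Rightarrow> real \<Rightarrow> bool" where
  "UT J L \<longleftrightarrow> (\<forall>e>0. \<exists>B. \<forall>a b. a \<le> - B \<longrightarrow> B \<le> b \<longrightarrow> \<bar>J a b - L\<bar> \<le> e)"

lemma UT_tendsto:
  assumes "UT J L" shows "((\<lambda>x. J (fst x) (snd x)) \<longlongrightarrow> L) (at_bot \<times>\<^sub>F at_top)"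
proof (rule tendstoI)
  fix e :: real assume "e > 0"
  then obtain B where B: "\<forall>a b. a \<le> - B \<longrightarrow> B \<le> b \<longrightarrow> \<bar>J a b - L\<bar> \<le> e/2"
    using assms unfolding UT_def by (meson half_gt_zero)
  show "eventually (\<lambda>x. dist (J (fst x) (snd x)) L < e) (at_bot \<times>\<^sub>F at_top)"
    unfolding eventually_prod_filter
  proof (intro exI conjI)
    show "eventually (\<lambda>a. a \<le> - B) at_bot" by simp
    show "eventually (\<lambda>b. B \<le> b) at_top" by simp
    show "\<forall>x y. x \<le> - B \<longrightarrow> B \<le> y \<longrightarrow> dist (J (fst (x, y)) (snd (x, y))) L < e"
      using B \<open>e > 0\<close> by (auto simp: dist_real_def) (smt (verit))
  qed
qed

lemma prod_nontriv: "\<not> trivial_limit (at_bot \<times>\<^sub>F (at_top :: real filter) :: (real \<times> real) filter)"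
  by (simp add: prod_filter_eq_bot)

lemma UT_integral:
  assumes ex: "\<And>a b. a \<le> b \<Longrightarrow> hsc H g a b (hs_int H g a b)" and U: "UT (hs_int H g) L"
  shows "hs_integrable_R H g" "hs_integral_R H g = L"
proof -
  have T: "((\<lambda>(a,b). hs_int H g a b) \<longlongrightarrow> L) (at_bot \<times>\<^sub>F at_top)"
    using UT_tendsto[OF U] by (simp add: case_prod_unfold)
  show "hs_integrable_R H g" unfolding hs_integrable_R_def using ex hsc_hs T by blast
  show "hs_integral_R H g = L" unfolding hs_integral_R_def by (rule tendsto_Lim[OF prod_nontriv T])
qed

lemma UT_from_cauchy:
  assumes C: "\<And>e. e > 0 \<Longrightarrow> \<exists>B. \<forall>a b. a \<le> - B \<longrightarrow> B \<le> b \<longrightarrow> \<bar>J a b - J (- B) B\<bar> \<le> e"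
  shows "\<exists>L. UT J L"
proof -
  define u where "u n = J (- real n) (real n)" for n
  have "Cauchy u"
  proof (rule metric_CauchyI)
    fix e :: real assume "e > 0"
    then obtain B where B: "\<forall>a b. a \<le> - B \<longrightarrow> B \<le> b \<longrightarrow> \<bar>J a b - J (- B) B\<bar> \<le> e/3"
      using C[of "e/3"] by auto
    obtain M :: nat where M: "B \<le> real M" using real_arch_simple by blast
    show "\<exists>M. \<forall>m\<ge>M. \<forall>n\<ge>M. dist (u m) (u n) < e"
    proof (intro exI[of _ M] allI impI)
      fix m n assume "M \<le> m" "M \<le> n"
      then have "B \<le> real m" "B \<le> real n" using M by linarith+
      then have "\<bar>u m - J (- B) B\<bar> \<le> e/3" "\<bar>u n - J (- B) B\<bar> \<le> e/3" using B unfolding u_def by auto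
      then have "\<bar>u m - u n\<bar> \<le> e/3 + e/3" by (rule abs_tri2)
      then show "dist (u m) (u n) < e" using \<open>e > 0\<close> by (simp add: dist_real_def)
    qed
  qed
  then obtain L where L: "u \<longlonglongrightarrow> L" using Cauchy_convergent_iff convergent_def by blast
  have "UT J L" unfolding UT_def
  proof (intro allI impI)
    fix e :: real assume "e > 0"
    then obtain B where B: "\<forall>a b. a \<le> - B \<longrightarrow> B \<le> b \<longrightarrow> \<bar>J a b - J (- B) B\<bar> \<le> e/2"
      using C[of "e/2"] by auto
    have "\<bar>L - J (- B) B\<bar> \<le> e/2"
    proof (rule tendsto_upperbound)
      show "((\<lambda>n. \<bar>u n - J (- B) B\<bar>) \<longlongrightarrow> \<bar>L - J (- B) B\<bar>) sequentially" by (intro tendsto_intros L)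
      obtain M :: nat where M: "B \<le> real M" using real_arch_simple by blast
      show "eventually (\<lambda>n. \<bar>u n - J (- B) B\<bar> \<le> e/2) sequentially"
        unfolding eventually_sequentially
      proof (intro exI[of _ M] allI impI)
        fix n assume "M \<le> n"
        then have "B \<le> real n" using M by (meson of_nat_le_iff order_trans)
        then show "\<bar>u n - J (- B) B\<bar> \<le> e/2" using B unfolding u_def by auto
      qed
    qed simp
    then show "\<exists>B. \<forall>a b. a \<le> - B \<longrightarrow> B \<le> b \<longrightarrow> \<bar>J a b - L\<bar> \<le> e"
    proof (intro exI[of _ B] allI impI)
      fix a b assume "a \<le> - B" "B \<le> b"
      then have "\<bar>J a b - J (- B) B\<bar> \<le> e/2" using B by blast
      then have "\<bar>J a b - L\<bar> \<le> e/2 + e/2" using \<open>\<bar>L - J (- B) B\<bar> \<le> e/2\<close>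
        by (rule abs_tri2)
      then show "\<bar>J a b - L\<bar> \<le> e" by simp
    qed
  qed
  then show ?thesis by blast
qed

lemma hsc_self:
  assumes g: "is_BV g" and H: "continuous_on UNIV H" and ab: "a \<le> b"
  shows "hsc H g a b (hs_int H g a b)"
proof -
  obtain I where "hsc H g a b I" using hsc_exists[OF g continuous_on_subset[OF H]] by blast
  then show ?thesis using hsc_int by simp
qed

lemma RL_exists:
  assumes g: "is_BV g" and H: "continuous_on UNIV H" and M: "\<And>y. \<bar>H y\<bar> \<le> M"
  shows "\<exists>L. UT (hs_int H g) L"
proof (rule UT_from_cauchy)
  fix e :: real assume "e > 0"
  have M0: "0 \<le> M" using M[of 0] by linarith
  define e' where "e' = e / (2 * M + 1)"
  have e': "e' > 0" using \<open>e > 0\<close> M0 unfolding e'_def by simp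
  have e'le: "2 * M * e' \<le> e" unfolding e'_def using \<open>e > 0\<close> M0 by (simp add: field_simps)
  obtain B1 where B1: "\<forall>s\<in>fams g {B1..}. s \<le> e'" using tail_top[OF g e'] by blast
  obtain B2 where B2: "\<forall>s\<in>fams g {..B2}. s \<le> e'" using tail_bot[OF g e'] by blast
  define B where "B = max 0 (max B1 (- B2))"
  have Bp: "0 \<le> B" "B1 \<le> B" "- B \<le> B2" unfolding B_def by auto
  let ?J = "hs_int H g"
  show "\<exists>B. \<forall>a b. a \<le> - B \<longrightarrow> B \<le> b \<longrightarrow> \<bar>?J a b - ?J (- B) B\<bar> \<le> e"
  proof (intro exI[of _ B] allI impI)
    fix a b assume ab: "a \<le> - B" "B \<le> b"
    have h1: "?J a b = ?J a (- B) + ?J (- B) b"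
      by (rule hsc_additive[OF ab(1) _ hsc_self[OF g H] hsc_self[OF g H] hsc_self[OF g H]]) (use ab Bp in auto)
    have h2: "?J (- B) b = ?J (- B) B + ?J B b"
      by (rule hsc_additive[OF _ ab(2) hsc_self[OF g H] hsc_self[OF g H] hsc_self[OF g H]]) (use ab Bp in auto)
    have t1: "\<bar>?J a (- B)\<bar> \<le> M * e'"
    proof (rule hsc_bound[OF ab(1) hsc_self[OF g H ab(1)]])
      show "\<bar>H y\<bar> \<le> M" for y by (rule M)
      fix s assume "s \<in> fams g {a..- B}"
      moreover have "fams g {a..- B} \<subseteq> fams g {..B2}" using Bp by (intro fams_mono) auto
      ultimately show "s \<le> e'" using B2 by blast
    qed
    have t2: "\<bar>?J B b\<bar> \<le> M * e'"
    proof (rule hsc_bound[OF ab(2) hsc_self[OF g H ab(2)]])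
      show "\<bar>H y\<bar> \<le> M" for y by (rule M)
      fix s assume "s \<in> fams g {B..b}"
      moreover have "fams g {B..b} \<subseteq> fams g {B1..}" using Bp by (intro fams_mono) auto
      ultimately show "s \<le> e'" using B1 by blast
    qed
    show "\<bar>?J a b - ?J (- B) B\<bar> \<le> e" using h1 h2 t1 t2 e'le by linarith
  qed
qed

definition VL :: "(real \<Rightarrow> real) \<Rightarrow> real \<Rightarrow> real" where "VL g y0 = Sup (fams g {..y0})"
definition VR :: "(real \<Rightarrow> real) \<Rightarrow> real \<Rightarrow> real" where "VR g y0 = Sup (fams g {y0..})"

lemma fams_bdd: "is_BV g \<Longrightarrow> bdd_above (fams g A)"
  using fams_le_Var by (meson bdd_aboveI)

lemma VL_upper: "is_BV g \<Longrightarrow> s \<in> fams g {..y0} \<Longrightarrow> s \<le> VL g y0"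
  unfolding VL_def by (rule cSup_upper) (auto intro: fams_bdd)

lemma VR_upper: "is_BV g \<Longrightarrow> s \<in> fams g {y0..} \<Longrightarrow> s \<le> VR g y0"
  unfolding VR_def by (rule cSup_upper) (auto intro: fams_bdd)

lemma VL_VR_Var: assumes g: "is_BV g" shows "VL g y0 + VR g y0 \<le> Var g"
proof -
  have ne: "fams g A \<noteq> {}" for A using zero_fams by blast
  have "VL g y0 \<le> Var g - VR g y0"
    unfolding VL_def
  proof (rule cSup_least[OF ne])
    fix s1 assume s1: "s1 \<in> fams g {..y0}"
    have "VR g y0 \<le> Var g - s1"
      unfolding VR_def
    proof (rule cSup_least[OF ne])
      fix s2 assume "s2 \<in> fams g {y0..}"
      then show "s2 \<le> Var g - s1" using split_Var[OF g s1] by fastforce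
    qed
    then show "s1 \<le> Var g - VR g y0" by linarith
  qed
  then show ?thesis by linarith
qed

lemma VL_nonneg: "is_BV g \<Longrightarrow> 0 \<le> VL g y0" using VL_upper zero_fams by blast
lemma VR_nonneg: "is_BV g \<Longrightarrow> 0 \<le> VR g y0" using VR_upper zero_fams by blast

lemma VR_tail: assumes g: "is_BV g" and e: "e > 0" shows "\<exists>B. \<forall>y0\<ge>B. VR g y0 \<le> e"
proof -
  obtain B where B: "\<forall>s\<in>fams g {B..}. s \<le> e" using tail_top[OF g e] by blast
  have "VR g y0 \<le> e" if "B \<le> y0" for y0
    unfolding VR_def
  proof (rule cSup_least)
    show "fams g {y0..} \<noteq> {}" using zero_fams by blast
    fix s assume "s \<in> fams g {y0..}"
    moreover have "fams g {y0..} \<subseteq> fams g {B..}" using that by (intro fams_mono) auto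
    ultimately show "s \<le> e" using B by blast
  qed
  then show ?thesis by blast
qed

lemma VL_tail: assumes g: "is_BV g" and e: "e > 0" shows "\<exists>B. \<forall>y0\<le>B. VL g y0 \<le> e"
proof -
  obtain B where B: "\<forall>s\<in>fams g {..B}. s \<le> e" using tail_bot[OF g e] by blast
  have "VL g y0 \<le> e" if "y0 \<le> B" for y0
    unfolding VL_def
  proof (rule cSup_least)
    show "fams g {..y0} \<noteq> {}" using zero_fams by blast
    fix s assume "s \<in> fams g {..y0}"
    moreover have "fams g {..y0} \<subseteq> fams g {..B}" using that by (intro fams_mono) auto
    ultimately show "s \<le> e" using B by blast
  qed
  then show ?thesis by blast
qed



lemma abs_sub_le: "\<bar>x - l1\<bar> \<le> e/2 \<Longrightarrow> \<bar>y - l2\<bar> \<le> e/2 \<Longrightarrow> \<bar>x - y - (l1 - l2)\<bar> \<le> (e::real)"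
  unfolding abs_le_iff by linarith

lemma abs_p2_aux: "J = Ja + Jb \<Longrightarrow> \<bar>Ja + - c1 * u\<bar> \<le> w1 \<Longrightarrow> \<bar>Jb + - c2 * v\<bar> \<le> w2
  \<Longrightarrow> \<bar>J - c1 * u - c2 * v\<bar> \<le> w1 + (w2::real)"
  unfolding abs_le_iff by linarith

lemma UT_cong:
  assumes eq: "\<And>a b. a \<le> b \<Longrightarrow> J a b = J' a b" and U: "UT J L" shows "UT J' L"
  unfolding UT_def
proof (intro allI impI)
  fix e :: real assume "e > 0"
  then obtain B where B: "\<forall>a b. a \<le> - B \<longrightarrow> B \<le> b \<longrightarrow> \<bar>J a b - L\<bar> \<le> e" using U unfolding UT_def by blast
  show "\<exists>B. \<forall>a b. a \<le> - B \<longrightarrow> B \<le> b \<longrightarrow> \<bar>J' a b - L\<bar> \<le> e"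
  proof (intro exI[of _ "max B 0"] allI impI)
    fix a b assume ab: "a \<le> - max B 0" "max B 0 \<le> b"
    then have "a \<le> b" by linarith
    have "B \<le> max B 0" by simp
    then have "a \<le> - B" "B \<le> b" using ab by linarith+
    then have "\<bar>J a b - L\<bar> \<le> e" using B by blast
    then show "\<bar>J' a b - L\<bar> \<le> e" using eq[OF \<open>a \<le> b\<close>] by simp
  qed
qed

lemma UT_diff:
  assumes U1: "UT J1 L1" and U2: "UT J2 L2" shows "UT (\<lambda>a b. J1 a b - J2 a b) (L1 - L2)"
  unfolding UT_def
proof (intro allI impI)
  fix e :: real assume "e > 0"
  then obtain B1 where B1: "\<forall>a b. a \<le> - B1 \<longrightarrow> B1 \<le> b \<longrightarrow> \<bar>J1 a b - L1\<bar> \<le> e/2" using U1 unfolding UT_def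
    by (meson half_gt_zero)
  obtain B2 where B2: "\<forall>a b. a \<le> - B2 \<longrightarrow> B2 \<le> b \<longrightarrow> \<bar>J2 a b - L2\<bar> \<le> e/2" using U2 \<open>e > 0\<close> unfolding UT_def
    by (meson half_gt_zero)
  show "\<exists>B. \<forall>a b. a \<le> - B \<longrightarrow> B \<le> b \<longrightarrow> \<bar>J1 a b - J2 a b - (L1 - L2)\<bar> \<le> e"
  proof (intro exI[of _ "max B1 B2"] allI impI)
    fix a b assume ab: "a \<le> - max B1 B2" "max B1 B2 \<le> b"
    have "B1 \<le> max B1 B2" "B2 \<le> max B1 B2" by simp_all
    then have "a \<le> - B1" "B1 \<le> b" "a \<le> - B2" "B2 \<le> b" using ab by linarith+
    then have "\<bar>J1 a b - L1\<bar> \<le> e/2" "\<bar>J2 a b - L2\<bar> \<le> e/2" using B1 B2 by blast+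
    then show "\<bar>J1 a b - J2 a b - (L1 - L2)\<bar> \<le> e" by (rule abs_sub_le)
  qed
qed

lemma UT_shift:
  assumes U: "UT J L" shows "UT (\<lambda>a b. J (a + c) (b + c)) L"
  unfolding UT_def
proof (intro allI impI)
  fix e :: real assume "e > 0"
  then obtain B where B: "\<forall>a b. a \<le> - B \<longrightarrow> B \<le> b \<longrightarrow> \<bar>J a b - L\<bar> \<le> e" using U unfolding UT_def by blast
  show "\<exists>B. \<forall>a b. a \<le> - B \<longrightarrow> B \<le> b \<longrightarrow> \<bar>J (a + c) (b + c) - L\<bar> \<le> e"
  proof (intro exI[of _ "B + \<bar>c\<bar>"] allI impI)
    fix a b assume ab: "a \<le> - (B + \<bar>c\<bar>)" "B + \<bar>c\<bar> \<le> b"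
    moreover have "- \<bar>c\<bar> \<le> c" "c \<le> \<bar>c\<bar>" by simp_all
    ultimately have "a + c \<le> - B" "B \<le> b + c" by linarith+
    then show "\<bar>J (a + c) (b + c) - L\<bar> \<le> e" using B by blast
  qed
qed

lemma UT_refl:
  assumes U: "UT J L" shows "UT (\<lambda>a b. J (c - b) (c - a)) L"
  unfolding UT_def
proof (intro allI impI)
  fix e :: real assume "e > 0"
  then obtain B where B: "\<forall>a b. a \<le> - B \<longrightarrow> B \<le> b \<longrightarrow> \<bar>J a b - L\<bar> \<le> e" using U unfolding UT_def by blast
  show "\<exists>B. \<forall>a b. a \<le> - B \<longrightarrow> B \<le> b \<longrightarrow> \<bar>J (c - b) (c - a) - L\<bar> \<le> e"
  proof (intro exI[of _ "B + \<bar>c\<bar>"] allI impI)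
    fix a b assume ab: "a \<le> - (B + \<bar>c\<bar>)" "B + \<bar>c\<bar> \<le> b"
    moreover have "- \<bar>c\<bar> \<le> c" "c \<le> \<bar>c\<bar>" by simp_all
    ultimately have "c - b \<le> - B" "B \<le> c - a" by linarith+
    then show "\<bar>J (c - b) (c - a) - L\<bar> \<le> e" using B by blast
  qed
qed

lemma UT_neg:
  assumes U: "UT J L" shows "UT (\<lambda>a b. - J a b) (- L)"
proof -
  have "\<bar>- x - - y\<bar> = \<bar>x - y\<bar>" for x y :: real by (auto simp: abs_if)
  then show ?thesis using U unfolding UT_def by simp
qed

lemma UT_unique: assumes "UT J L" "UT J L'" shows "L = L'"
  using tendsto_unique[OF prod_nontriv UT_tendsto[OF assms(1)] UT_tendsto[OF assms(2)]] .

lemma RL: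
  assumes g: "is_BV g" and H: "continuous_on UNIV H" and M: "\<And>y. \<bar>H y\<bar> \<le> M"
  shows "hs_integrable_R H g" "UT (hs_int H g) (hs_integral_R H g)"
proof -
  obtain L where U: "UT (hs_int H g) L" using RL_exists[OF g H M] by blast
  have ex: "\<And>a b. a \<le> b \<Longrightarrow> hsc H g a b (hs_int H g a b)" using hsc_self[OF g H] by blast
  show "hs_integrable_R H g" by (rule UT_integral(1)[OF ex U])
  show "UT (hs_int H g) (hs_integral_R H g)" using UT_integral(2)[OF ex U] U by simp
qed

lemma P2:
  assumes g: "is_BV g" and H: "continuous_on UNIV H" and M: "\<And>y. \<bar>H y\<bar> \<le> M"
    and H1: "\<And>y. y \<le> y0 \<Longrightarrow> \<bar>H y - c1\<bar> \<le> M1" and H2: "\<And>y. y0 \<le> y \<Longrightarrow> \<bar>H y - c2\<bar> \<le> M2"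
  shows "\<bar>hs_integral_R H g - c1 * (g y0 - lim_bot g) - c2 * (lim_top g - g y0)\<bar> \<le> M1 * VL g y0 + M2 * VR g y0"
proof -
  let ?J = "hs_int H g"
  let ?W = "M1 * VL g y0 + M2 * VR g y0"
  have U: "UT ?J (hs_integral_R H g)" using RL[OF g H M] by blast
  have est: "\<bar>?J a b - c1 * (g y0 - g a) - c2 * (g b - g y0)\<bar> \<le> ?W" if ab: "a \<le> y0" "y0 \<le> b" for a b
  proof -
    have add: "?J a b = ?J a y0 + ?J y0 b"
      by (rule hsc_additive[OF ab hsc_self[OF g H] hsc_self[OF g H] hsc_self[OF g H]]) (use ab in auto)
    have l: "\<bar>?J a y0 + - c1 * (g y0 - g a)\<bar> \<le> M1 * VL g y0"
    proof (rule hsc_bound[OF ab(1) hsc_add[OF hsc_self[OF g H ab(1)] hsc_const[OF ab(1)]]])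
      show "\<bar>H y + - c1\<bar> \<le> M1" if "y \<in> {a..y0}" for y using H1[of y] that by simp
      fix s assume "s \<in> fams g {a..y0}"
      moreover have "fams g {a..y0} \<subseteq> fams g {..y0}" by (intro fams_mono) auto
      ultimately show "s \<le> VL g y0" using VL_upper[OF g] by blast
    qed
    have r: "\<bar>?J y0 b + - c2 * (g b - g y0)\<bar> \<le> M2 * VR g y0"
    proof (rule hsc_bound[OF ab(2) hsc_add[OF hsc_self[OF g H ab(2)] hsc_const[OF ab(2)]]])
      show "\<bar>H y + - c2\<bar> \<le> M2" if "y \<in> {y0..b}" for y using H2[of y] that by simp
      fix s assume "s \<in> fams g {y0..b}"
      moreover have "fams g {y0..b} \<subseteq> fams g {y0..}" by (intro fams_mono) auto
      ultimately show "s \<le> VR g y0" using VR_upper[OF g] by blast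
    qed
    show ?thesis by (rule abs_p2_aux[OF add l r])
  qed
  have T: "((\<lambda>x. \<bar>?J (fst x) (snd x) - c1 * (g y0 - g (fst x)) - c2 * (g (snd x) - g y0)\<bar>) \<longlongrightarrow>
      \<bar>hs_integral_R H g - c1 * (g y0 - lim_bot g) - c2 * (lim_top g - g y0)\<bar>) (at_bot \<times>\<^sub>F at_top)"
  proof -
    have a: "((\<lambda>x. g (fst x)) \<longlongrightarrow> lim_bot g) (at_bot \<times>\<^sub>F at_top)"
      by (rule filterlim_compose[OF BV_lim_bot[OF g] filterlim_fst])
    have b: "((\<lambda>x. g (snd x)) \<longlongrightarrow> lim_top g) (at_bot \<times>\<^sub>F at_top)"
      by (rule filterlim_compose[OF BV_lim_top[OF g] filterlim_snd])
    show ?thesis by (intro tendsto_intros UT_tendsto[OF U] a b)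
  qed
  have ev: "eventually (\<lambda>x. \<bar>?J (fst x) (snd x) - c1 * (g y0 - g (fst x)) - c2 * (g (snd x) - g y0)\<bar> \<le> ?W)
      (at_bot \<times>\<^sub>F at_top)"
    unfolding eventually_prod_filter
  proof (intro exI conjI)
    show "eventually (\<lambda>a. a \<le> y0) at_bot" by simp
    show "eventually (\<lambda>b. y0 \<le> b) at_top" by simp
  qed (use est in auto)
  show ?thesis by (rule tendsto_upperbound[OF T ev prod_nontriv])
qed

lemma PHI_const:
  assumes g: "is_BV g" shows "hs_integral_R (\<lambda>y. c) g = c * (lim_top g - lim_bot g)"
proof -
  have "\<bar>hs_integral_R (\<lambda>y. c) g - c * (g 0 - lim_bot g) - c * (lim_top g - g 0)\<bar> \<le> 0 * VL g 0 + 0 * VR g 0"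
    by (rule P2[OF g, where M = "\<bar>c\<bar>"]) auto
  then show ?thesis by (simp add: algebra_simps)
qed

lemma PHI_diff:
  assumes g: "is_BV g" and H1: "continuous_on UNIV H1" "\<And>y. \<bar>H1 y\<bar> \<le> M1"
    and H2: "continuous_on UNIV H2" "\<And>y. \<bar>H2 y\<bar> \<le> M2"
  shows "hs_integral_R (\<lambda>y. H1 y - H2 y) g = hs_integral_R H1 g - hs_integral_R H2 g"
proof -
  have H: "continuous_on UNIV (\<lambda>y. H1 y - H2 y)" using H1(1) H2(1) by (intro continuous_intros)
  have M: "\<bar>H1 y - H2 y\<bar> \<le> M1 + M2" for y using H1(2)[of y] H2(2)[of y] by (simp add: abs_le_iff)
  have U: "UT (hs_int (\<lambda>y. H1 y - H2 y) g) (hs_integral_R (\<lambda>y. H1 y - H2 y) g)" using RL[OF g H M] by blast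
  have eq: "(\<lambda>y. H1 y + -1 * H2 y) = (\<lambda>y. H1 y - H2 y)" by auto
  have "hs_int H1 g a b - hs_int H2 g a b = hs_int (\<lambda>y. H1 y - H2 y) g a b" if "a \<le> b" for a b
  proof -
    have "hsc (\<lambda>y. H1 y + -1 * H2 y) g a b (hs_int H1 g a b + -1 * hs_int H2 g a b)"
      by (rule hsc_add[OF hsc_self[OF g H1(1) that] hsc_cmul[OF hsc_self[OF g H2(1) that]]])
    then show ?thesis unfolding eq using hsc_int by fastforce
  qed
  then have "UT (hs_int (\<lambda>y. H1 y - H2 y) g) (hs_integral_R H1 g - hs_integral_R H2 g)"
    by (rule UT_cong[OF _ UT_diff[OF RL(2)[OF g H1] RL(2)[OF g H2]]])
  then show ?thesis using UT_unique[OF U] by blast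
qed



lemma lim_refl_top: "(f \<longlongrightarrow> l) at_bot \<Longrightarrow> ((\<lambda>y. f (x - y)) \<longlongrightarrow> l) at_top" for f :: "real \<Rightarrow> real"
proof -
  assume f: "(f \<longlongrightarrow> l) at_bot"
  have "filterlim (\<lambda>y. x - y) at_bot (at_top :: real filter)"
    unfolding filterlim_at_bot
  proof
    fix Z :: real show "eventually (\<lambda>y. x - y \<le> Z) at_top"
      unfolding eventually_at_top_linorder by (intro exI[of _ "x - Z"]) auto
  qed
  then show ?thesis by (rule filterlim_compose[OF f])
qed

lemma lim_refl_bot: "(f \<longlongrightarrow> l) at_top \<Longrightarrow> ((\<lambda>y. f (x - y)) \<longlongrightarrow> l) at_bot" for f :: "real \<Rightarrow> real"
proof -
  assume f: "(f \<longlongrightarrow> l) at_top"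
  have "filterlim (\<lambda>y. x - y) at_top (at_bot :: real filter)"
    unfolding filterlim_at_top
  proof
    fix Z :: real show "eventually (\<lambda>y. Z \<le> x - y) at_bot"
      unfolding eventually_at_bot_linorder by (intro exI[of _ "x - Z"]) auto
  qed
  then show ?thesis by (rule filterlim_compose[OF f])
qed

lemma lim_shift_top: "(f \<longlongrightarrow> l) at_top \<Longrightarrow> ((\<lambda>y. f (y - z)) \<longlongrightarrow> l) at_top" for f :: "real \<Rightarrow> real"
proof -
  assume f: "(f \<longlongrightarrow> l) at_top"
  have "filterlim (\<lambda>y. y - z) at_top (at_top :: real filter)"
    unfolding filterlim_at_top
  proof
    fix Z :: real show "eventually (\<lambda>y. Z \<le> y - z) at_top"
      unfolding eventually_at_top_linorder by (intro exI[of _ "Z + z"]) auto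
  qed
  then show ?thesis by (rule filterlim_compose[OF f])
qed

lemma BC_facts:
  assumes "BC F"
  shows "continuous_on UNIV F" "(F \<longlongrightarrow> lim_top F) at_top" "(F \<longlongrightarrow> 0) at_bot" "lim_bot F = 0"
    "int_R F = lim_top F"
proof -
  show c: "continuous_on UNIV F" using assms unfolding BC_def C0bar_def by blast
  obtain L where "(F \<longlongrightarrow> L) at_top" using assms unfolding BC_def C0bar_def by blast
  moreover have "Lim at_top F = L" by (rule tendsto_Lim[OF _ calculation]) simp
  ultimately show t: "(F \<longlongrightarrow> lim_top F) at_top" unfolding lim_top_def by simp
  show b: "(F \<longlongrightarrow> 0) at_bot" using assms unfolding BC_def by blast
  show l: "lim_bot F = 0" unfolding lim_bot_def by (rule tendsto_Lim[OF _ b]) simp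
  show "int_R F = lim_top F" unfolding int_R_def l by simp
qed

lemma BC_bounded:
  assumes F: "BC F" shows "\<exists>M. \<forall>y. \<bar>F y\<bar> \<le> M"
proof -
  note Ff = BC_facts[OF F]
  have "eventually (\<lambda>y. dist (F y) (lim_top F) < 1) at_top" using Ff(2) by (rule tendstoD) simp
  then obtain R1 where R1: "\<And>y. R1 \<le> y \<Longrightarrow> \<bar>F y - lim_top F\<bar> < 1"
    unfolding eventually_at_top_linorder dist_real_def by blast
  have "eventually (\<lambda>y. dist (F y) 0 < 1) at_bot" using Ff(3) by (rule tendstoD) simp
  then obtain R2 where R2: "\<And>y. y \<le> R2 \<Longrightarrow> \<bar>F y\<bar> < 1"
    unfolding eventually_at_bot_linorder dist_real_def by auto
  have "compact (F ` {R2..R1})" by (rule compact_continuous_image[OF continuous_on_subset[OF Ff(1)]]) auto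
  then obtain B where B: "\<And>y. y \<in> {R2..R1} \<Longrightarrow> \<bar>F y\<bar> \<le> B"
    using compact_imp_bounded bounded_real by (metis image_eqI)
  have "\<bar>F y\<bar> \<le> max B (max 1 (\<bar>lim_top F\<bar> + 1))" for y
  proof (cases "y \<le> R2")
    case True then show ?thesis using R2[of y] by simp
  next
    case False
    show ?thesis
    proof (cases "R1 \<le> y")
      case True then have "\<bar>F y - lim_top F\<bar> < 1" by (rule R1)
      then have "\<bar>F y\<bar> \<le> \<bar>lim_top F\<bar> + 1" using abs_triangle_ineq2[of "F y" "lim_top F"] by linarith
      then show ?thesis by simp
    next
      case False2: False
      then have "y \<in> {R2..R1}" using False by auto
      then show ?thesis using B by fastforce
    qed
  qed
  then show ?thesis by blast
qed

lemma alex_facts: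
  assumes F: "BC F"
  shows "\<And>s t. \<bar>F t - F s\<bar> \<le> alex_norm F" "\<And>t. \<bar>lim_top F - F t\<bar> \<le> alex_norm F"
    "\<And>t. \<bar>F t\<bar> \<le> alex_norm F" "\<bar>lim_top F\<bar> \<le> alex_norm F" "0 \<le> alex_norm F"
proof -
  note Ff = BC_facts[OF F]
  obtain M where M: "\<And>y. \<bar>F y\<bar> \<le> M" using BC_bounded[OF F] by blast
  have bdd: "bdd_above ((\<lambda>p. \<bar>F (snd p) - F (fst p)\<bar>) ` {p :: real \<times> real. fst p \<le> snd p})"
  proof (rule bdd_aboveI2)
    fix p :: "real \<times> real" show "\<bar>F (snd p) - F (fst p)\<bar> \<le> 2 * M"
      using M[of "snd p"] M[of "fst p"] by (simp add: abs_le_iff)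
  qed
  show st: "\<bar>F t - F s\<bar> \<le> alex_norm F" for s t
  proof (cases "s \<le> t")
    case True
    then show ?thesis unfolding alex_norm_def
      using cSUP_upper[OF _ bdd, of "(s,t)"] by simp
  next
    case False
    then show ?thesis unfolding alex_norm_def
      using cSUP_upper[OF _ bdd, of "(t,s)"] by (simp add: abs_minus_commute)
  qed
  show lt: "\<bar>lim_top F - F t\<bar> \<le> alex_norm F" for t
  proof (rule tendsto_upperbound)
    show "((\<lambda>s. \<bar>F s - F t\<bar>) \<longlongrightarrow> \<bar>lim_top F - F t\<bar>) at_top" by (intro tendsto_intros Ff(2))
    show "eventually (\<lambda>s. \<bar>F s - F t\<bar> \<le> alex_norm F) at_top" using st by simp
  qed simp
  show ft: "\<bar>F t\<bar> \<le> alex_norm F" for t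
  proof (rule tendsto_upperbound)
    have "((\<lambda>s. \<bar>F t - F s\<bar>) \<longlongrightarrow> \<bar>F t - 0\<bar>) at_bot" by (intro tendsto_intros Ff(3))
    then show "((\<lambda>s. \<bar>F t - F s\<bar>) \<longlongrightarrow> \<bar>F t\<bar>) at_bot" by simp
    show "eventually (\<lambda>s. \<bar>F t - F s\<bar> \<le> alex_norm F) at_bot" using st by simp
  qed simp
  show "\<bar>lim_top F\<bar> \<le> alex_norm F"
  proof (rule tendsto_upperbound)
    have "((\<lambda>s. \<bar>lim_top F - F s\<bar>) \<longlongrightarrow> \<bar>lim_top F - 0\<bar>) at_bot" by (intro tendsto_intros Ff(3))
    then show "((\<lambda>s. \<bar>lim_top F - F s\<bar>) \<longlongrightarrow> \<bar>lim_top F\<bar>) at_bot" by simp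
    show "eventually (\<lambda>s. \<bar>lim_top F - F s\<bar> \<le> alex_norm F) at_bot" using lt by simp
  qed simp
  show "0 \<le> alex_norm F" using ft[of 0] by linarith
qed

lemma abs_half1: "\<bar>a - c\<bar> < e/2 \<Longrightarrow> \<bar>b - c\<bar> < e/2 \<Longrightarrow> \<bar>a - b\<bar> \<le> (e::real)"
  unfolding abs_less_iff abs_le_iff by linarith

lemma abs_half2: "\<bar>a\<bar> < e/2 \<Longrightarrow> \<bar>b\<bar> < e/2 \<Longrightarrow> \<bar>a - b\<bar> \<le> (e::real)"
  unfolding abs_less_iff abs_le_iff by linarith

lemma BC_unif:
  assumes F: "BC F" and e: "e > 0"
  shows "\<exists>d>0. \<forall>s t. \<bar>s - t\<bar> < d \<longrightarrow> \<bar>F s - F t\<bar> \<le> e"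
proof -
  note Ff = BC_facts[OF F]
  have "eventually (\<lambda>y. dist (F y) (lim_top F) < e/2) at_top" using Ff(2) e by (intro tendstoD) simp_all
  then obtain R1 where R1: "\<And>y. R1 \<le> y \<Longrightarrow> \<bar>F y - lim_top F\<bar> < e/2"
    unfolding eventually_at_top_linorder dist_real_def by blast
  have "eventually (\<lambda>y. dist (F y) 0 < e/2) at_bot" using Ff(3) e by (intro tendstoD) simp_all
  then obtain R2' where R2': "\<And>y. y \<le> R2' \<Longrightarrow> \<bar>F y\<bar> < e/2"
    unfolding eventually_at_bot_linorder dist_real_def by auto
  define R2 where "R2 = min R2' R1"
  have R2: "\<And>y. y \<le> R2 \<Longrightarrow> \<bar>F y\<bar> < e/2" "R2 \<le> R1" using R2' unfolding R2_def by auto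
  have "uniformly_continuous_on {R2 - 1..R1 + 1} F"
    by (rule compact_uniformly_continuous[OF continuous_on_subset[OF Ff(1)]]) auto
  then obtain d0 where d0: "d0 > 0" "\<forall>x\<in>{R2 - 1..R1 + 1}. \<forall>x'\<in>{R2 - 1..R1 + 1}. dist x' x < d0 \<longrightarrow> dist (F x') (F x) < e"
    using e unfolding uniformly_continuous_on_def by metis
  define d where "d = min d0 1"
  have "\<bar>F s - F t\<bar> \<le> e" if st: "\<bar>s - t\<bar> < d" for s t
  proof -
    have d1: "\<bar>s - t\<bar> < 1" "\<bar>s - t\<bar> < d0" using st unfolding d_def by auto
    show ?thesis
    proof (cases "s \<in> {R2 - 1..R1 + 1} \<and> t \<in> {R2 - 1..R1 + 1}")
      case True
      then show ?thesis using d0(2) d1 by (auto simp: dist_real_def intro: less_imp_le)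
    next
      case False
      then have "(R1 \<le> s \<and> R1 \<le> t) \<or> (s \<le> R2 \<and> t \<le> R2)" using d1(1) R2(2) by (auto simp: abs_less_iff)
      then show ?thesis
      proof
        assume "R1 \<le> s \<and> R1 \<le> t"
        then have "\<bar>F s - lim_top F\<bar> < e/2" "\<bar>F t - lim_top F\<bar> < e/2" using R1 by auto
        then show ?thesis by (rule abs_half1)
      next
        assume "s \<le> R2 \<and> t \<le> R2"
        then have "\<bar>F s\<bar> < e/2" "\<bar>F t\<bar> < e/2" using R2 by auto
        then show ?thesis by (rule abs_half2)
      qed
    qed
  qed
  moreover have "d > 0" using d0 unfolding d_def by simp
  ultimately show ?thesis by blast
qed



lemma eps_lt2: "0 < e \<Longrightarrow> 0 \<le> V \<Longrightarrow> e / (2 * (V + 1)) * V < (e::real) / 2"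
proof -
  assume a: "0 < e" "0 \<le> V"
  have "V / (2 * (V + 1)) < 1 / 2" using a by (simp add: field_simps)
  then have "e * (V / (2 * (V + 1))) < e * (1 / 2)" using a by (intro mult_strict_left_mono)
  moreover have "e / (2 * (V + 1)) * V = e * (V / (2 * (V + 1)))" by simp
  ultimately show ?thesis by simp
qed

lemma eps_lt1: "0 < e \<Longrightarrow> 0 \<le> V \<Longrightarrow> e / (2 * (V + 1)) * V < (e::real)"
  using eps_lt2[of e V] by linarith

lemma VLVR_mult:
  assumes g: "is_BV g" and "0 \<le> M1" "0 \<le> M2" "M1 \<le> M" "M2 \<le> M"
  shows "M1 * VL g y0 + M2 * VR g y0 \<le> M * Var g"
proof -
  have "M1 * VL g y0 \<le> M * VL g y0" "M2 * VR g y0 \<le> M * VR g y0"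
    using assms VL_nonneg[OF g] VR_nonneg[OF g] by (auto intro: mult_right_mono)
  moreover have "M * (VL g y0 + VR g y0) \<le> M * Var g"
    using VL_VR_Var[OF g] assms by (intro mult_left_mono) auto
  ultimately show ?thesis by (simp add: distrib_left)
qed

lemma refl_cont: "BC F \<Longrightarrow> continuous_on UNIV (\<lambda>y. F (x - y))"
  by (rule continuous_on_compose2[OF BC_facts(1)]) (auto intro!: continuous_intros)

lemma reflp_props:
  assumes F: "BC F"
  shows "continuous_on UNIV (reflp F x)" "\<And>y. \<bar>reflp F x y\<bar> \<le> alex_norm F" "lim_top (reflp F x) = lim_top F"
    "\<And>y. \<bar>reflp F x y - lim_top F\<bar> \<le> alex_norm F"
proof -
  show "continuous_on UNIV (reflp F x)" unfolding reflp_def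
    by (intro continuous_intros refl_cont[OF F])
  show "\<bar>reflp F x y\<bar> \<le> alex_norm F" for y unfolding reflp_def using alex_facts(2)[OF F] by blast
  show "\<bar>reflp F x y - lim_top F\<bar> \<le> alex_norm F" for y unfolding reflp_def using alex_facts(3)[OF F] by simp
  have "((\<lambda>y. lim_top F - F (x - y)) \<longlongrightarrow> lim_top F - 0) at_top"
    by (intro tendsto_intros lim_refl_top BC_facts(3)[OF F])
  then have "lim_top (\<lambda>y. lim_top F - F (x - y)) = lim_top F"
    unfolding lim_top_def by (intro tendsto_Lim) auto
  then show "lim_top (reflp F x) = lim_top F" unfolding reflp_def by simp
qed

lemma conv_eq:
  assumes F: "BC F"
  shows "conv_fg F g x = lim_top F * lim_top g - hs_integral_R (reflp F x) g"
  unfolding conv_fg_def prod_int_def reflp_props(3)[OF F] ..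

lemma cbound:
  assumes F: "BC F" and g: "is_BV g"
  shows "\<bar>conv_fg F g x - lim_top F * g y0\<bar> \<le> alex_norm F * Var g"
proof -
  let ?A = "alex_norm F"
  have A0: "0 \<le> ?A" using alex_facts(5)[OF F] .
  have "\<bar>hs_integral_R (reflp F x) g - 0 * (g y0 - lim_bot g) - lim_top F * (lim_top g - g y0)\<bar>
      \<le> ?A * VL g y0 + ?A * VR g y0"
    by (rule P2[OF g reflp_props(1,2)[OF F] _ reflp_props(4)[OF F]]) (use reflp_props(2)[OF F] in simp)
  also have "\<dots> \<le> ?A * Var g" by (rule VLVR_mult[OF g A0 A0]) auto
  finally show ?thesis unfolding conv_eq[OF F] by (simp add: algebra_simps abs_minus_commute)
qed

lemma conv_cont:
  assumes F: "BC F" and g: "is_BV g"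
  shows "continuous_on UNIV (conv_fg F g)"
  unfolding continuous_on_iff
proof (intro ballI allI impI)
  fix x :: real and e :: real assume "e > 0"
  define \<epsilon> where "\<epsilon> = e / (2 * (Var g + 1))"
  have V0: "0 \<le> Var g" by (rule Var_nonneg[OF g])
  have eps: "\<epsilon> > 0" unfolding \<epsilon>_def using \<open>e > 0\<close> V0 by simp
  have epsV: "\<epsilon> * Var g < e" unfolding \<epsilon>_def using eps_lt1[OF \<open>e > 0\<close> V0] .
  obtain d where d: "d > 0" "\<And>s t. \<bar>s - t\<bar> < d \<Longrightarrow> \<bar>F s - F t\<bar> \<le> \<epsilon>" using BC_unif[OF F eps] by blast
  show "\<exists>d>0. \<forall>x'\<in>UNIV. dist x' x < d \<longrightarrow> dist (conv_fg F g x') (conv_fg F g x) < e"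
  proof (intro exI[of _ d] conjI ballI impI)
    show "d > 0" by (rule d(1))
    fix x' :: real assume "dist x' x < d"
    then have xx: "\<bar>(x' - y) - (x - y)\<bar> < d" for y by (simp add: dist_real_def)
    let ?A = "alex_norm F"
    have dif: "hs_integral_R (\<lambda>y. reflp F x y - reflp F x' y) g = hs_integral_R (reflp F x) g - hs_integral_R (reflp F x') g"
      by (rule PHI_diff[OF g reflp_props(1,2)[OF F] reflp_props(1,2)[OF F]])
    have Hc: "continuous_on UNIV (\<lambda>y. reflp F x y - reflp F x' y)" using reflp_props(1)[OF F]
      by (intro continuous_intros)
    have HM: "\<bar>reflp F x y - reflp F x' y\<bar> \<le> ?A + ?A" for y
      using reflp_props(2)[OF F, of x y] reflp_props(2)[OF F, of x' y] by (simp add: abs_le_iff)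
    have Hd: "\<bar>reflp F x y - reflp F x' y - 0\<bar> \<le> \<epsilon>" for y
      using d(2)[OF xx[of y]] unfolding reflp_def by (simp add: abs_minus_commute)
    have "\<bar>hs_integral_R (\<lambda>y. reflp F x y - reflp F x' y) g - 0 * (g 0 - lim_bot g) - 0 * (lim_top g - g 0)\<bar>
        \<le> \<epsilon> * VL g 0 + \<epsilon> * VR g 0"
      by (rule P2[OF g Hc HM Hd Hd])
    also have "\<dots> \<le> \<epsilon> * Var g" by (rule VLVR_mult[OF g]) (use eps in auto)
    finally have "\<bar>hs_integral_R (reflp F x) g - hs_integral_R (reflp F x') g\<bar> \<le> \<epsilon> * Var g"
      unfolding dif by simp
    then show "dist (conv_fg F g x') (conv_fg F g x) < e"
      unfolding dist_real_def conv_eq[OF F] using epsV by (simp add: abs_minus_commute)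
  qed
qed

lemma conv_top:
  assumes F: "BC F" and g: "is_BV g"
  shows "(conv_fg F g \<longlongrightarrow> lim_top g * int_R F) at_top"
proof (rule tendstoI)
  fix e :: real assume "e > 0"
  let ?A = "alex_norm F"
  have A0: "0 \<le> ?A" using alex_facts(5)[OF F] .
  have V0: "0 \<le> Var g" by (rule Var_nonneg[OF g])
  define \<epsilon> where "\<epsilon> = e / (2 * (Var g + 1))"
  have eps: "\<epsilon> > 0" unfolding \<epsilon>_def using \<open>e > 0\<close> V0 by simp
  have epsV: "\<epsilon> * Var g < e/2" unfolding \<epsilon>_def using eps_lt2[OF \<open>e > 0\<close> V0] .
  have e2: "e / (2 * (?A + 1)) > 0" using \<open>e > 0\<close> A0 by simp
  obtain y0 where y0: "VR g y0 \<le> e / (2 * (?A + 1))" using VR_tail[OF g e2] by blast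
  have AVR: "?A * VR g y0 < e/2"
  proof -
    have "?A * VR g y0 \<le> ?A * (e / (2 * (?A + 1)))" using y0 A0 by (intro mult_left_mono)
    also have "\<dots> < e/2" using \<open>e > 0\<close> A0 by (simp add: field_simps)
    finally show ?thesis .
  qed
  have "eventually (\<lambda>t. dist (F t) (lim_top F) < \<epsilon>) at_top" using BC_facts(2)[OF F] eps by (rule tendstoD)
  then obtain R where R: "\<And>t. R \<le> t \<Longrightarrow> \<bar>F t - lim_top F\<bar> < \<epsilon>"
    unfolding eventually_at_top_linorder dist_real_def by blast
  show "eventually (\<lambda>x. dist (conv_fg F g x) (lim_top g * int_R F) < e) at_top"
    unfolding eventually_at_top_linorder
  proof (intro exI[of _ "y0 + R"] allI impI)
    fix x assume x: "y0 + R \<le> x"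
    have H1: "\<bar>reflp F x y - 0\<bar> \<le> \<epsilon>" if "y \<le> y0" for y
      using R[of "x - y"] x that unfolding reflp_def by (simp add: abs_minus_commute)
    have H2: "\<bar>reflp F x y - 0\<bar> \<le> ?A" for y using reflp_props(2)[OF F] by simp
    have "\<bar>hs_integral_R (reflp F x) g - 0 * (g y0 - lim_bot g) - 0 * (lim_top g - g y0)\<bar>
        \<le> \<epsilon> * VL g y0 + ?A * VR g y0"
      by (rule P2[OF g reflp_props(1,2)[OF F] H1 H2])
    moreover have "\<epsilon> * VL g y0 \<le> \<epsilon> * Var g"
      using VL_VR_Var[OF g, of y0] VR_nonneg[OF g, of y0] eps by (intro mult_left_mono) auto
    ultimately have "\<bar>hs_integral_R (reflp F x) g\<bar> < e" using epsV AVR by simp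
    then show "dist (conv_fg F g x) (lim_top g * int_R F) < e"
      unfolding dist_real_def conv_eq[OF F] BC_facts(5)[OF F] by (simp add: algebra_simps)
  qed
qed

lemma conv_bot:
  assumes F: "BC F" and g: "is_BV g"
  shows "(conv_fg F g \<longlongrightarrow> lim_bot g * int_R F) at_bot"
proof (rule tendstoI)
  fix e :: real assume "e > 0"
  let ?A = "alex_norm F"
  have A0: "0 \<le> ?A" using alex_facts(5)[OF F] .
  have V0: "0 \<le> Var g" by (rule Var_nonneg[OF g])
  define \<epsilon> where "\<epsilon> = e / (2 * (Var g + 1))"
  have eps: "\<epsilon> > 0" unfolding \<epsilon>_def using \<open>e > 0\<close> V0 by simp
  have epsV: "\<epsilon> * Var g < e/2" unfolding \<epsilon>_def using eps_lt2[OF \<open>e > 0\<close> V0] .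
  have e2: "e / (2 * (?A + 1)) > 0" using \<open>e > 0\<close> A0 by simp
  obtain y0 where y0: "VL g y0 \<le> e / (2 * (?A + 1))" using VL_tail[OF g e2] by blast
  have AVL: "?A * VL g y0 < e/2"
  proof -
    have "?A * VL g y0 \<le> ?A * (e / (2 * (?A + 1)))" using y0 A0 by (intro mult_left_mono)
    also have "\<dots> < e/2" using \<open>e > 0\<close> A0 by (simp add: field_simps)
    finally show ?thesis .
  qed
  have "eventually (\<lambda>t. dist (F t) 0 < \<epsilon>) at_bot" using BC_facts(3)[OF F] eps by (rule tendstoD)
  then obtain R where R: "\<And>t. t \<le> R \<Longrightarrow> \<bar>F t\<bar> < \<epsilon>"
    unfolding eventually_at_bot_linorder dist_real_def by auto
  show "eventually (\<lambda>x. dist (conv_fg F g x) (lim_bot g * int_R F) < e) at_bot"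
    unfolding eventually_at_bot_linorder
  proof (intro exI[of _ "y0 + R"] allI impI)
    fix x assume x: "x \<le> y0 + R"
    have H2: "\<bar>reflp F x y - lim_top F\<bar> \<le> \<epsilon>" if "y0 \<le> y" for y
      using R[of "x - y"] x that unfolding reflp_def by simp
    have "\<bar>hs_integral_R (reflp F x) g - lim_top F * (g y0 - lim_bot g) - lim_top F * (lim_top g - g y0)\<bar>
        \<le> ?A * VL g y0 + \<epsilon> * VR g y0"
      by (rule P2[OF g reflp_props(1,2)[OF F] reflp_props(4)[OF F] H2])
    moreover have "\<epsilon> * VR g y0 \<le> \<epsilon> * Var g"
      using VL_VR_Var[OF g, of y0] VL_nonneg[OF g, of y0] eps by (intro mult_left_mono) auto
    ultimately have "\<bar>hs_integral_R (reflp F x) g - lim_top F * (lim_top g - lim_bot g)\<bar> < e"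
      using epsV AVL by (simp add: algebra_simps)
    then show "dist (conv_fg F g x) (lim_bot g * int_R F) < e"
      unfolding dist_real_def conv_eq[OF F] BC_facts(5)[OF F]
      by (simp add: algebra_simps abs_minus_commute)
  qed
qed



lemma lim_top_refl_g: assumes g: "is_BV g" shows "lim_top (\<lambda>y. g (x - y)) = lim_bot g"
  unfolding lim_top_def by (rule tendsto_Lim[OF _ lim_refl_top[OF BV_lim_bot[OF g]]]) simp

lemma lim_top_shift: "(f \<longlongrightarrow> l) at_top \<Longrightarrow> lim_top (\<lambda>y. f (y - z)) = l"
  unfolding lim_top_def by (rule tendsto_Lim[OF _ lim_shift_top]) simp_all

lemma conv_comm:
  assumes F: "BC F" and g: "is_BV g"
  shows "hs_integrable_R F (\<lambda>y. g (x - y)) \<and> conv_fg F g x = conv_gf F g x"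
proof -
  let ?G = "\<lambda>y. F (x - y)"
  let ?Fi = "lim_top F"
  have Gc: "continuous_on UNIV ?G" by (rule refl_cont[OF F])
  have GM: "\<bar>?G y\<bar> \<le> alex_norm F" for y using alex_facts(3)[OF F] by blast
  have UG: "UT (hs_int ?G g) (hs_integral_R ?G g)" by (rule RL(2)[OF g Gc GM])
  have hs: "hsc F (\<lambda>y. g (x - y)) a b (- hs_int ?G g (x - b) (x - a))" if ab: "a \<le> b" for a b
  proof -
    have "hsc ?G g (x - b) (x - a) (hs_int ?G g (x - b) (x - a))"
      by (rule hsc_self[OF g Gc]) (use ab in simp)
    from hsc_reflect[OF this, of x] show ?thesis by simp
  qed
  have ex: "hsc F (\<lambda>y. g (x - y)) a b (hs_int F (\<lambda>y. g (x - y)) a b)" if "a \<le> b" for a b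
    using hs[OF that] hsc_int by metis
  have eqJ: "- hs_int ?G g (x - b) (x - a) = hs_int F (\<lambda>y. g (x - y)) a b" if "a \<le> b" for a b
    using hsc_int[OF hs[OF that]] by simp
  have "UT (\<lambda>a b. - hs_int ?G g (x - b) (x - a)) (- hs_integral_R ?G g)"
    using UT_neg[OF UT_refl[OF UG, of x]] by simp
  then have U: "UT (hs_int F (\<lambda>y. g (x - y))) (- hs_integral_R ?G g)"
    by (rule UT_cong[rotated]) (rule eqJ)
  have int: "hs_integrable_R F (\<lambda>y. g (x - y))" by (rule UT_integral(1)[OF ex U])
  have val: "hs_integral_R F (\<lambda>y. g (x - y)) = - hs_integral_R ?G g" by (rule UT_integral(2)[OF ex U])
  have gf: "conv_gf F g x = ?Fi * lim_bot g + hs_integral_R ?G g"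
    unfolding conv_gf_def prod_int_def val lim_top_refl_g[OF g] by simp
  have cb: "\<And>y. \<bar>(\<lambda>y. ?Fi) y\<bar> \<le> \<bar>?Fi\<bar>" by simp
  have rp: "reflp F x = (\<lambda>y. (\<lambda>y. ?Fi) y - ?G y)" unfolding reflp_def by simp
  have "hs_integral_R (reflp F x) g = hs_integral_R (\<lambda>y. ?Fi) g - hs_integral_R ?G g"
    unfolding rp by (rule PHI_diff[OF g continuous_on_const cb Gc GM])
  also have "\<dots> = ?Fi * (lim_top g - lim_bot g) - hs_integral_R ?G g" using PHI_const[OF g] by simp
  finally have "conv_fg F g x = ?Fi * lim_bot g + hs_integral_R ?G g"
    unfolding conv_eq[OF F] by (simp add: algebra_simps)
  with gf int show ?thesis by simp
qed

lemma transl_F: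
  assumes F: "BC F"
  shows "conv_fg (transl z F) g x = conv_fg F g (x - z)"
proof -
  have l: "lim_top (transl z F) = lim_top F"
    unfolding transl_def by (rule lim_top_shift[OF BC_facts(2)[OF F]])
  have "reflp (transl z F) x = reflp F (x - z)"
    unfolding reflp_def l by (simp add: transl_def algebra_simps)
  then show ?thesis unfolding conv_fg_def by simp
qed

lemma transl_g:
  assumes F: "BC F" and g: "is_BV g"
  shows "conv_fg F (transl z g) x = conv_fg F g (x - z)"
proof -
  let ?H = "reflp F (x - z)"
  have Hc: "continuous_on UNIV ?H" and HM: "\<And>y. \<bar>?H y\<bar> \<le> alex_norm F" using reflp_props[OF F] by blast+
  have UH: "UT (hs_int ?H g) (hs_integral_R ?H g)" by (rule RL(2)[OF g Hc HM])
  have fH: "(\<lambda>y. ?H (y + - z)) = reflp F x" unfolding reflp_def by (simp add: algebra_simps)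
  have fg: "(\<lambda>y. g (y + - z)) = transl z g" unfolding transl_def by simp
  have hs: "hsc (reflp F x) (transl z g) a b (hs_int ?H g (a + - z) (b + - z))" if ab: "a \<le> b" for a b
  proof -
    have "hsc ?H g (a + - z) (b + - z) (hs_int ?H g (a + - z) (b + - z))"
      by (rule hsc_self[OF g Hc]) (use ab in simp)
    from hsc_transl[OF this, of "- z"] show ?thesis unfolding fH fg by simp
  qed
  have ex: "hsc (reflp F x) (transl z g) a b (hs_int (reflp F x) (transl z g) a b)" if "a \<le> b" for a b
    using hs[OF that] hsc_int by metis
  have eqJ: "hs_int ?H g (a + - z) (b + - z) = hs_int (reflp F x) (transl z g) a b" if "a \<le> b" for a b
    using hsc_int[OF hs[OF that]] by simp
  have U: "UT (hs_int (reflp F x) (transl z g)) (hs_integral_R ?H g)"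
    by (rule UT_cong[OF eqJ UT_shift[OF UH]])
  have val: "hs_integral_R (reflp F x) (transl z g) = hs_integral_R ?H g" by (rule UT_integral(2)[OF ex U])
  have lg: "lim_top (transl z g) = lim_top g"
    unfolding transl_def by (rule lim_top_shift[OF BV_lim_top[OF g]])
  show ?thesis
    unfolding conv_fg_def prod_int_def val lg reflp_props(3)[OF F] ..
qed

lemma sup_part:
  assumes F: "BC F" and g: "is_BV g"
  shows "bdd_above (range (\<lambda>x. \<bar>conv_fg F g x\<bar>))
       \<and> (SUP x. \<bar>conv_fg F g x\<bar>) \<le> \<bar>int_R F\<bar> * (INF y. \<bar>g y\<bar>) + alex_norm F * Var g
       \<and> \<bar>int_R F\<bar> * (INF y. \<bar>g y\<bar>) + alex_norm F * Var g \<le> alex_norm F * BV_norm g"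
proof -
  let ?Fi = "lim_top F"
  let ?A = "alex_norm F"
  let ?I = "INF y. \<bar>g y\<bar>"
  have iF: "int_R F = ?Fi" by (rule BC_facts(5)[OF F])
  have pt: "\<bar>conv_fg F g x\<bar> \<le> \<bar>?Fi\<bar> * \<bar>g y\<bar> + ?A * Var g" for x y
  proof -
    have "\<bar>conv_fg F g x - ?Fi * g y\<bar> \<le> ?A * Var g" by (rule cbound[OF F g])
    then show ?thesis using abs_triangle_ineq2[of "conv_fg F g x" "?Fi * g y"] by (simp add: abs_mult)
  qed
  have bdd: "bdd_above (range (\<lambda>x. \<bar>conv_fg F g x\<bar>))"
    using pt[of _ 0] by (intro bdd_aboveI2) blast
  have bb: "bdd_below (range (\<lambda>y. \<bar>g y\<bar>))" by (rule bdd_belowI2[of _ 0]) simp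
  have each: "\<bar>conv_fg F g x\<bar> \<le> \<bar>?Fi\<bar> * ?I + ?A * Var g" for x
  proof (cases "?Fi = 0")
    case True then show ?thesis using pt[of x 0] by simp
  next
    case False
    then have Fp: "\<bar>?Fi\<bar> > 0" by simp
    have "(\<bar>conv_fg F g x\<bar> - ?A * Var g) / \<bar>?Fi\<bar> \<le> ?I"
    proof (rule cINF_greatest)
      fix y show "(\<bar>conv_fg F g x\<bar> - ?A * Var g) / \<bar>?Fi\<bar> \<le> \<bar>g y\<bar>"
        using pt[of x y] Fp by (simp add: divide_le_eq mult.commute)
    qed simp
    then show ?thesis using Fp by (simp add: divide_le_eq mult.commute)
  qed
  have sup: "(SUP x. \<bar>conv_fg F g x\<bar>) \<le> \<bar>int_R F\<bar> * ?I + ?A * Var g"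
    unfolding iF by (rule cSUP_least) (use each in auto)
  have I0: "0 \<le> ?I" by (rule cINF_greatest) auto
  have Ilim: "?I \<le> \<bar>lim_bot g\<bar>"
  proof (rule tendsto_lowerbound)
    show "((\<lambda>y. \<bar>g y\<bar>) \<longlongrightarrow> \<bar>lim_bot g\<bar>) at_bot" by (intro tendsto_intros BV_lim_bot[OF g])
    show "eventually (\<lambda>y. ?I \<le> \<bar>g y\<bar>) at_bot" using cINF_lower[OF bb] by simp
  qed simp
  have "\<bar>?Fi\<bar> * ?I \<le> ?A * \<bar>lim_bot g\<bar>"
    by (rule mult_mono[OF alex_facts(4)[OF F] Ilim alex_facts(5)[OF F] I0])
  then have last: "\<bar>int_R F\<bar> * ?I + ?A * Var g \<le> ?A * BV_norm g"
    unfolding iF BV_norm_def by (simp add: distrib_left)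
  show ?thesis using bdd sup last by blast
qed

theorem theorem2p1:
  fixes F g :: "real \<Rightarrow> real"
  assumes F: "BC F" and g: "is_BV g"
  shows "(\<forall>x. hs_integrable_R (reflp F x) g)
    \<and> (\<forall>x. hs_integrable_R F (\<lambda>y. g (x - y)) \<and> conv_fg F g x = conv_gf F g x)
    \<and> (bdd_above (range (\<lambda>x. \<bar>conv_fg F g x\<bar>))
       \<and> (SUP x. \<bar>conv_fg F g x\<bar>) \<le> \<bar>int_R F\<bar> * (INF y. \<bar>g y\<bar>) + alex_norm F * Var g
       \<and> \<bar>int_R F\<bar> * (INF y. \<bar>g y\<bar>) + alex_norm F * Var g \<le> alex_norm F * BV_norm g)
    \<and> (C0bar (conv_fg F g)
       \<and> (conv_fg F g \<longlongrightarrow> lim_top g * int_R F) at_top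
       \<and> (conv_fg F g \<longlongrightarrow> lim_bot g * int_R F) at_bot)
    \<and> (\<forall>x z. transl z (conv_fg F g) x = conv_fg (transl z F) g x
          \<and> conv_fg (transl z F) g x = conv_fg F (transl z g) x)"
proof (intro conjI allI)
  fix x show "hs_integrable_R (reflp F x) g" using RL(1)[OF g reflp_props(1,2)[OF F]] by blast
next
  fix x show "hs_integrable_R F (\<lambda>y. g (x - y))" using conv_comm[OF F g] by blast
next
  fix x show "conv_fg F g x = conv_gf F g x" using conv_comm[OF F g] by blast
next
  show "bdd_above (range (\<lambda>x. \<bar>conv_fg F g x\<bar>))" by (rule conjunct1[OF sup_part[OF F g]])
next
  show "(SUP x. \<bar>conv_fg F g x\<bar>) \<le> \<bar>int_R F\<bar> * (INF y. \<bar>g y\<bar>) + alex_norm F * Var g"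
    by (rule conjunct1[OF conjunct2[OF sup_part[OF F g]]])
next
  show "\<bar>int_R F\<bar> * (INF y. \<bar>g y\<bar>) + alex_norm F * Var g \<le> alex_norm F * BV_norm g"
    by (rule conjunct2[OF conjunct2[OF sup_part[OF F g]]])
next
  show "C0bar (conv_fg F g)" unfolding C0bar_def using conv_cont[OF F g] conv_top[OF F g] conv_bot[OF F g] by blast
next
  show "(conv_fg F g \<longlongrightarrow> lim_top g * int_R F) at_top" by (rule conv_top[OF F g])
next
  show "(conv_fg F g \<longlongrightarrow> lim_bot g * int_R F) at_bot" by (rule conv_bot[OF F g])
next
  fix x z show "transl z (conv_fg F g) x = conv_fg (transl z F) g x"
    unfolding transl_F[OF F] by (simp add: transl_def)
next
  fix x z show "conv_fg (transl z F) g x = conv_fg F (transl z g) x"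
    unfolding transl_F[OF F] transl_g[OF F g] ..
qed

end
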